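(* Let $\Lambda$ be a linear functional on $\widehat{\mathcal D}^+_0=\mathcal D^+_0\oplus\mathbb C C$, and let $L(\widehat{\mathcal D}^+;\Lambda)$ be the irreducible highest weight $\widehat{\mathcal D}^+$-module with highest weight $\Lambda$. Define $\Delta^+_n=-\Lambda((D+1/2)^n)$ for odd $n\ge1$ and $\Delta^+_\Lambda(x)=\sum_{n\ \mathrm{odd}\ \ge1}\frac{x^n}{n!}\Delta^+_n$. Then $L(\widehat{\mathcal D}^+;\Lambda)$ is quasifinite if and only if $\Delta^+_\Lambda(x)=\dfrac{F(x)}{2\sinh(x/2)}$ for some even quasipolynomial $F(x)$ with $F(0)=0$.
   Context: $\mathcal D$ is the Lie algebra of differential operators $t^kf(D)$ on the circle ($D=t\frac d{dt}$, $f$ polynomial, $f(D)t^s=t^sf(D+s)$). $\widehat{\mathcal D}=\mathcal D\oplus\mathbb CC$ with $[t^rf(D),t^sg(D)]=t^{r+s}(f(D+s)g(D)-f(D)g(D+r))+\Psi(t^rf(D),t^sg(D))C$, where $\Psi=0$ if $r+s\ne0$, $\Psi(t^rf(D),t^{-r}g(D))=\sum_{-r\le j\le-1}f(j)g(j+r)$ for $r\ge0$ (and $\Psi$ is antisymmetric). $\mathcal D^+=\{a\in\mathcal D:\sigma(a)=-a\}$ where $\sigma$ is the anti-involution with $t\mapsto t$, $D\mapsto -D-1$; $\widehat{\mathcal D}^+=\mathcal D^+\oplus\mathbb CC\subset\widehat{\mathcal D}$. Grading: $\deg t^kf(D)=k$, $\deg C=0$; $\widehat{\mathcal D}^+_{\pm}$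 = sum of positive/negative degree parts; $\mathcal D^+_0=\{g(D+1/2):g\text{ odd polynomial}\}$. A highest weight module is generated by a vector annihilated by $\widehat{\mathcal D}^+_+$ on which $\widehat{\mathcal D}^+_0$ acts by $\Lambda$; $L(\widehat{\mathcal D}^+;\Lambda)$ is the irreducible quotient of the Verma module. A graded module $V=\oplus_jV_j$ is quasifinite if every $V_j$ is finite dimensional. A quasipolynomial is a finite linear combination of functions $p(x)e^{\alpha x}$, $p$ polynomial, $\alpha\in\mathbb C$. *)

theory Defs
  imports "HOL-Analysis.Analysis" "HOL-Computational_Algebra.Polynomial"
    "HOL-Computational_Algebra.Formal_Power_Series"
begin

(* An element of the Lie algebra D of differential operators on the circle,
   sum_k t^k f_k(D), is represented by the coefficient function k |-> f_k
   (finite support required where relevant).  An element of Dhat = D + CC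
   is a pair (a, c) standing for a + c*C. *)
type_synonym dop = "int \<Rightarrow> complex poly"
type_synonym dhat = "dop \<times> complex"

definition supp :: "dop \<Rightarrow> int set" where
  "supp a = {k. a k \<noteq> 0}"

definition shiftp :: "complex poly \<Rightarrow> int \<Rightarrow> complex poly" where
  "shiftp f s = pcompose f [:of_int s, 1:]"

(* [t^r f(D), t^s g(D)] = t^(r+s) (f(D+s) g(D) - f(D) g(D+r)), extended bilinearly *)
definition brD :: "dop \<Rightarrow> dop \<Rightarrow> dop" where
  "brD a b = (\<lambda>k. \<Sum>r\<in>supp a. shiftp (a r) (k - r) * b (k - r) - a r * shiftp (b (k - r)) r)"

(* Psi(t^r f(D), t^(-r) g(D)); for r < 0 obtained by antisymmetry *)
definition psi_mono :: "int \<Rightarrow> complex poly \<Rightarrow> complex poly \<Rightarrow> complex" where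
  "psi_mono r f g =
     (if r \<ge> 0 then (\<Sum>j\<in>{-r..-1}. poly f (of_int j) * poly g (of_int (j + r)))
      else - (\<Sum>j\<in>{r..-1}. poly g (of_int j) * poly f (of_int (j - r))))"

definition psi :: "dop \<Rightarrow> dop \<Rightarrow> complex" where
  "psi a b = (\<Sum>r\<in>supp a. psi_mono r (a r) (b (- r)))"

definition brHat :: "dhat \<Rightarrow> dhat \<Rightarrow> dhat" where
  "brHat x y = (brD (fst x) (fst y), psi (fst x) (fst y))"

definition addHat :: "dhat \<Rightarrow> dhat \<Rightarrow> dhat" where
  "addHat x y = ((\<lambda>k. fst x k + fst y k), snd x + snd y)"

definition scaleHat :: "complex \<Rightarrow> dhat \<Rightarrow> dhat" where
  "scaleHat c x = ((\<lambda>k. smult c (fst x k)), c * snd x)"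

(* sigma(t^k f(D)) = f(-D-1) t^k = t^k f(-D-k-1); D^+ = {a. sigma a = -a} *)
definition Dplus :: "dop set" where
  "Dplus = {a. finite (supp a) \<and> (\<forall>k. pcompose (a k) [:- of_int k - 1, -1:] = - a k)}"

definition DhatPlus :: "dhat set" where
  "DhatPlus = {x. fst x \<in> Dplus}"

definition DhatPlus_pos :: "dhat set" where
  "DhatPlus_pos = {(a, 0) | a. a \<in> Dplus \<and> (\<forall>k\<le>0. a k = 0)}"

definition DhatPlus_zero :: "dhat set" where
  "DhatPlus_zero = {(a, c) | a c. a \<in> Dplus \<and> (\<forall>k. k \<noteq> 0 \<longrightarrow> a k = 0)}"

definition mono0 :: "complex poly \<Rightarrow> dhat" where
  "mono0 g = ((\<lambda>k. if k = 0 then g else 0), 0)"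

definition halfD :: "complex poly" where
  "halfD = [:1/2, 1:]"

definition linear_on_zero :: "(dhat \<Rightarrow> complex) \<Rightarrow> bool" where
  "linear_on_zero \<Lambda> \<longleftrightarrow>
     (\<forall>x\<in>DhatPlus_zero. \<forall>y\<in>DhatPlus_zero. \<Lambda> (addHat x y) = \<Lambda> x + \<Lambda> y) \<and>
     (\<forall>c. \<forall>x\<in>DhatPlus_zero. \<Lambda> (scaleHat c x) = c * \<Lambda> x)"

definition is_rep :: "(complex \<Rightarrow> 'v::ab_group_add \<Rightarrow> 'v) \<Rightarrow> (dhat \<Rightarrow> 'v \<Rightarrow> 'v) \<Rightarrow> bool" where
  "is_rep sc \<pi> \<longleftrightarrow> vector_space sc \<and>
     (\<forall>x\<in>DhatPlus. \<forall>u w. \<pi> x (u + w) = \<pi> x u + \<pi> x w) \<and>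
     (\<forall>x\<in>DhatPlus. \<forall>c u. \<pi> x (sc c u) = sc c (\<pi> x u)) \<and>
     (\<forall>x\<in>DhatPlus. \<forall>y\<in>DhatPlus. \<forall>u. \<pi> (addHat x y) u = \<pi> x u + \<pi> y u) \<and>
     (\<forall>x\<in>DhatPlus. \<forall>c u. \<pi> (scaleHat c x) u = sc c (\<pi> x u)) \<and>
     (\<forall>x\<in>DhatPlus. \<forall>y\<in>DhatPlus. \<forall>u. \<pi> (brHat x y) u = \<pi> x (\<pi> y u) - \<pi> y (\<pi> x u))"

definition invariant_subspace :: "(complex \<Rightarrow> 'v::ab_group_add \<Rightarrow> 'v) \<Rightarrow> (dhat \<Rightarrow> 'v \<Rightarrow> 'v) \<Rightarrow> 'v set \<Rightarrow> bool" where
  "invariant_subspace sc \<pi> W \<longleftrightarrow> module.subspace sc W \<and> (\<forall>x\<in>DhatPlus. \<pi> x ` W \<subseteq> W)"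

definition hw_vector :: "(complex \<Rightarrow> 'v::ab_group_add \<Rightarrow> 'v) \<Rightarrow> (dhat \<Rightarrow> 'v \<Rightarrow> 'v) \<Rightarrow> (dhat \<Rightarrow> complex) \<Rightarrow> 'v \<Rightarrow> bool" where
  "hw_vector sc \<pi> \<Lambda> v \<longleftrightarrow> v \<noteq> 0 \<and>
     (\<forall>x\<in>DhatPlus_pos. \<pi> x v = 0) \<and>
     (\<forall>h\<in>DhatPlus_zero. \<pi> h v = sc (\<Lambda> h) v) \<and>
     (\<forall>W. invariant_subspace sc \<pi> W \<and> v \<in> W \<longrightarrow> W = UNIV)"

definition irreducible_rep :: "(complex \<Rightarrow> 'v::ab_group_add \<Rightarrow> 'v) \<Rightarrow> (dhat \<Rightarrow> 'v \<Rightarrow> 'v) \<Rightarrow> bool" where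
  "irreducible_rep sc \<pi> \<longleftrightarrow> (\<exists>u::'v. u \<noteq> 0) \<and>
     (\<forall>W. invariant_subspace sc \<pi> W \<longrightarrow> W = {0} \<or> W = UNIV)"

(* graded piece V_j: ad(D+1/2) is the degree derivation, so V_j is the
   eigenspace of pi(D+1/2) for the eigenvalue Lambda(D+1/2) + j *)
definition grade_space :: "(complex \<Rightarrow> 'v::ab_group_add \<Rightarrow> 'v) \<Rightarrow> (dhat \<Rightarrow> 'v \<Rightarrow> 'v) \<Rightarrow> (dhat \<Rightarrow> complex) \<Rightarrow> int \<Rightarrow> 'v set" where
  "grade_space sc \<pi> \<Lambda> j =
     {w. \<pi> (mono0 halfD) w = sc (\<Lambda> (mono0 halfD) + of_int j) w}"

definition quasifinite :: "(complex \<Rightarrow> 'v::ab_group_add \<Rightarrow> 'v) \<Rightarrow> (dhat \<Rightarrow> 'v \<Rightarrow> 'v) \<Rightarrow> (dhat \<Rightarrow> complex) \<Rightarrow> bool" where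
  "quasifinite sc \<pi> \<Lambda> \<longleftrightarrow>
     (\<forall>j::int. \<exists>B. finite B \<and> B \<subseteq> grade_space sc \<pi> \<Lambda> j \<and>
        grade_space sc \<pi> \<Lambda> j \<subseteq> module.span sc B)"

definition DeltaN :: "(dhat \<Rightarrow> complex) \<Rightarrow> nat \<Rightarrow> complex" where
  "DeltaN \<Lambda> n = - \<Lambda> (mono0 (halfD ^ n))"

definition DeltaFps :: "(dhat \<Rightarrow> complex) \<Rightarrow> complex fps" where
  "DeltaFps \<Lambda> = Abs_fps (\<lambda>n. if odd n then DeltaN \<Lambda> n / fact n else 0)"

definition is_quasipoly :: "(complex \<Rightarrow> complex) \<Rightarrow> bool" where
  "is_quasipoly F \<longleftrightarrow>
     (\<exists>ps :: (complex poly \<times> complex) list.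
        \<forall>x. F x = (\<Sum>(p, \<alpha>)\<leftarrow>ps. poly p x * exp (\<alpha> * x)))"

definition taylor_fps :: "(complex \<Rightarrow> complex) \<Rightarrow> complex fps" where
  "taylor_fps F = Abs_fps (\<lambda>n. (deriv ^^ n) F 0 / fact n)"

end

theory Submission
  imports Defs "HOL-Computational_Algebra.Polynomial_FPS" "HOL-Computational_Algebra.Fundamental_Theorem_Algebra"
begin
unbundle no vec_syntax
unbundle fps_syntax


definition fps_refl :: "complex fps \<Rightarrow> complex fps" where
  "fps_refl f = Abs_fps (\<lambda>n. (-1)^n * f $ n)"

lemma fps_refl_nth[simp]: "fps_refl f $ n = (-1)^n * f $ n"
  by (simp add: fps_refl_def)

lemma fps_refl_0[simp]: "fps_refl 0 = 0"
  by (simp add: fps_eq_iff)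

lemma fps_const_m1: "fps_const (-1::complex) = -1"
  by (metis fps_const_neg fps_const_1_eq_1)

lemma fps_refl_add: "fps_refl (f + g) = fps_refl f + fps_refl g"
  by (simp add: fps_eq_iff algebra_simps)

lemma fps_refl_diff: "fps_refl (f - g) = fps_refl f - fps_refl g"
  by (simp add: fps_eq_iff algebra_simps)

lemma fps_refl_uminus: "fps_refl (- f) = - fps_refl f"
  by (simp add: fps_eq_iff algebra_simps)

lemma fps_refl_const_mult: "fps_refl (fps_const c * f) = fps_const c * fps_refl f"
  by (simp add: fps_eq_iff algebra_simps)

lemma fps_refl_refl[simp]: "fps_refl (fps_refl f) = f"
  by (simp add: fps_eq_iff)

lemma fps_refl_mult: "fps_refl (f * g) = fps_refl f * fps_refl g"
proof (rule fps_ext)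
  fix n
  have "fps_refl (f * g) $ n = (\<Sum>i=0..n. (-1)^n * (f $ i * g $ (n-i)))"
    by (simp add: fps_mult_nth sum_distrib_left)
  also have "\<dots> = (\<Sum>i=0..n. ((-1)^i * f $ i) * ((-1)^(n-i) * g $ (n-i)))"
  proof (rule sum.cong)
    fix i assume "i \<in> {0..n}"
    then have "(-1::complex)^n = (-1)^i * (-1)^(n-i)"
      by (simp add: power_add[symmetric])
    then show "(-1)^n * (f $ i * g $ (n-i)) = ((-1)^i * f $ i) * ((-1)^(n-i) * g $ (n-i))"
      by simp
  qed simp
  also have "\<dots> = (fps_refl f * fps_refl g) $ n"
    by (simp add: fps_mult_nth)
  finally show "fps_refl (f * g) $ n = (fps_refl f * fps_refl g) $ n" .
qed

lemma fps_refl_deriv: "fps_refl (fps_deriv f) = - fps_deriv (fps_refl f)"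
  by (simp add: fps_eq_iff)

lemma fps_refl_exp: "fps_refl (fps_exp c) = fps_exp (-c)"
proof (rule fps_ext)
  fix n
  have "(-c)^n = (-1)^n * c^n" by (rule power_minus)
  then show "fps_refl (fps_exp c) $ n = fps_exp (-c) $ n" by simp
qed

lemma fps_refl_derivs: "fps_refl ((fps_deriv ^^ i) f) = fps_const ((-1)^i) * (fps_deriv ^^ i) (fps_refl f)"
proof (induction i)
  case 0
  then show ?case by simp
next
  case (Suc i)
  show ?case
    by (simp add: fps_refl_deriv Suc fps_const_neg[symmetric] fps_const_mult[symmetric] del: fps_const_neg fps_const_mult)
qed

definition pdiff :: "complex poly \<Rightarrow> complex fps \<Rightarrow> complex fps" where
  "pdiff g f = (\<Sum>i\<le>degree g. fps_const (coeff g i) * (fps_deriv ^^ i) f)"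

lemma pdiff_bound:
  assumes "degree g \<le> N"
  shows "pdiff g f = (\<Sum>i\<le>N. fps_const (coeff g i) * (fps_deriv ^^ i) f)"
proof -
  have "(\<Sum>i\<le>N. fps_const (coeff g i) * (fps_deriv ^^ i) f)
      = (\<Sum>i\<le>degree g. fps_const (coeff g i) * (fps_deriv ^^ i) f)"
    using assms by (intro sum.mono_neutral_right) (auto simp: coeff_eq_0)
  then show ?thesis by (simp add: pdiff_def)
qed

lemma derivs_add: "(fps_deriv ^^ i) ((f::complex fps) + g) = (fps_deriv ^^ i) f + (fps_deriv ^^ i) g"
  by (induction i) (auto)

lemma derivs_const_mult: "(fps_deriv ^^ i) (fps_const c * (f::complex fps)) = fps_const c * (fps_deriv ^^ i) f"
  by (induction i) (auto)

lemma derivs_uminus: "(fps_deriv ^^ i) (- (f::complex fps)) = - (fps_deriv ^^ i) f"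
  by (induction i) (auto)

lemma derivs_diff: "(fps_deriv ^^ i) ((f::complex fps) - g) = (fps_deriv ^^ i) f - (fps_deriv ^^ i) g"
  by (induction i) (auto)

lemma pdiff_add_poly: "pdiff (p + q) f = pdiff p f + pdiff q f"
proof -
  define N where "N = max (degree p) (degree q)"
  have "degree (p+q) \<le> N" by (simp add: N_def degree_add_le)
  then show ?thesis
    by (simp add: pdiff_bound[of _ N] N_def sum.distrib distrib_right fps_const_add[symmetric] del: fps_const_add)
qed

lemma pdiff_smult: "pdiff (smult c p) f = fps_const c * pdiff p f"
proof -
  have "degree (smult c p) \<le> degree p" by simp
  then show ?thesis
    by (simp add: pdiff_bound[of _ "degree p"] pdiff_def sum_distrib_left mult.assoc fps_const_mult[symmetric] del: fps_const_mult)
qed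

lemma pdiff_0[simp]: "pdiff 0 f = 0"
  by (simp add: pdiff_def)

lemma pdiff_const[simp]: "pdiff [:c:] f = fps_const c * f"
  by (simp add: pdiff_def)

lemma pdiff_add: "pdiff g (f1 + f2) = pdiff g f1 + pdiff g f2"
  by (simp add: pdiff_def derivs_add distrib_left sum.distrib)

lemma pdiff_const_mult: "pdiff g (fps_const c * f) = fps_const c * pdiff g f"
  by (simp add: pdiff_def derivs_const_mult sum_distrib_left mult.left_commute)

lemma pdiff_uminus: "pdiff g (- f) = - pdiff g f"
  by (simp add: pdiff_def derivs_uminus sum_negf)

lemma pdiff_diff: "pdiff g (f1 - f2) = pdiff g f1 - pdiff g f2"
  by (simp add: pdiff_def derivs_diff right_diff_distrib sum_subtractf)

lemma pdiff_zero[simp]: "pdiff g 0 = 0"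
  using pdiff_diff[of g 0 0] by simp

lemma pdiff_pCons: "pdiff (pCons a p) f = fps_const a * f + fps_deriv (pdiff p f)"
proof -
  have d: "degree (pCons a p) \<le> Suc (degree p)" by (simp add: degree_pCons_le)
  have "pdiff (pCons a p) f = (\<Sum>i\<le>Suc (degree p). fps_const (coeff (pCons a p) i) * (fps_deriv ^^ i) f)"
    by (rule pdiff_bound[OF d])
  also have "\<dots> = fps_const a * f + (\<Sum>i\<le>degree p. fps_const (coeff p i) * (fps_deriv ^^ Suc i) f)"
    by (subst sum.atMost_Suc_shift) simp
  also have "(\<Sum>i\<le>degree p. fps_const (coeff p i) * (fps_deriv ^^ Suc i) f) = fps_deriv (pdiff p f)"
    by (simp add: pdiff_def fps_deriv_sum)
  finally show ?thesis .
qed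

lemma pdiff_mult: "pdiff (p * q) f = pdiff p (pdiff q f)"
proof (induction p rule: pCons_induct)
  case 0
  then show ?case by simp
next
  case (pCons a p)
  have "pCons a p * q = smult a q + pCons 0 (p * q)"
    by simp
  then have "pdiff (pCons a p * q) f = fps_const a * pdiff q f + fps_deriv (pdiff (p*q) f)"
    by (simp add: pdiff_add_poly pdiff_smult pdiff_pCons)
  then show ?case by (simp add: pCons.IH pdiff_pCons)
qed

lemma pdiff_comm: "pdiff p (pdiff q f) = pdiff q (pdiff p f)"
  by (metis pdiff_mult mult.commute)

lemma pdiff_one[simp]: "pdiff 1 f = f"
  using pdiff_const[of 1 f] by (simp add: one_pCons)

lemma pdiff_linear: "pdiff [:-a, 1:] f = fps_deriv f - fps_const a * f"
  by (simp add: pdiff_pCons fps_const_neg[symmetric] del: fps_const_neg)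

lemma derivs_nth: "fact n * ((fps_deriv ^^ i) (f::complex fps)) $ n = fact (n + i) * f $ (n + i)"
proof (induction i arbitrary: n)
  case 0
  then show ?case by simp
next
  case (Suc i)
  have "fact n * ((fps_deriv ^^ Suc i) f) $ n = fact n * (of_nat (n+1) * ((fps_deriv ^^ i) f) $ (n+1))"
    by simp
  also have "\<dots> = fact (n+1) * ((fps_deriv ^^ i) f) $ (n+1)"
    by (simp add: algebra_simps)
  also have "\<dots> = fact (n + Suc i) * f $ (n + Suc i)"
    using Suc[of "n+1"] by simp
  finally show ?case .
qed

lemma pdiff_nth: "fact n * (pdiff g f) $ n = (\<Sum>i\<le>degree g. coeff g i * (fact (n+i) * f $ (n+i)))"
  by (simp add: pdiff_def fps_sum_nth sum_distrib_left derivs_nth[symmetric] mult.left_commute)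

definition oddp :: "complex poly \<Rightarrow> bool" where
  "oddp g \<longleftrightarrow> (\<forall>i. even i \<longrightarrow> coeff g i = 0)"

lemma fps_refl_sum: "fps_refl (sum h A) = (\<Sum>i\<in>A. fps_refl (h i))"
  by (induction A rule: infinite_finite_induct) (simp_all add: fps_refl_add)

lemma pdiff_refl_odd:
  assumes "oddp g"
  shows "fps_refl (pdiff g f) = - pdiff g (fps_refl f)"
proof -
  have "fps_refl (pdiff g f) = (\<Sum>i\<le>degree g. fps_const (coeff g i) * fps_refl ((fps_deriv ^^ i) f))"
    unfolding pdiff_def by (simp add: fps_refl_sum fps_refl_const_mult)
  also have "\<dots> = (\<Sum>i\<le>degree g. - (fps_const (coeff g i) * (fps_deriv ^^ i) (fps_refl f)))"
  proof (rule sum.cong)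
    fix i assume "i \<in> {..degree g}"
    show "fps_const (coeff g i) * fps_refl ((fps_deriv ^^ i) f) = - (fps_const (coeff g i) * (fps_deriv ^^ i) (fps_refl f))"
    proof (cases "even i")
      case True
      then show ?thesis using assms by (simp add: oddp_def)
    next
      case False
      then show ?thesis by (simp add: fps_refl_derivs fps_const_m1)
    qed
  qed simp
  also have "\<dots> = - pdiff g (fps_refl f)"
    by (simp add: pdiff_def sum_negf)
  finally show ?thesis .
qed

lemma refl_eq_iff_odd0: "fps_refl A = A \<longleftrightarrow> (\<forall>n. odd n \<longrightarrow> A $ n = 0)"
proof -
  have "fps_refl A = A \<longleftrightarrow> (\<forall>n. (-1)^n * A $ n = A $ n)"
    by (simp add: fps_eq_iff)
  also have "\<dots> \<longleftrightarrow> (\<forall>n. odd n \<longrightarrow> A $ n = 0)"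
  proof (intro iffI allI impI)
    fix n :: nat assume h: "\<forall>n. (-1)^n * A $ n = A $ n" and n: "odd n"
    then have "- (A $ n) = A $ n" using h[rule_format, of n] by simp
    then show "A $ n = 0" by simp
  next
    fix n :: nat assume h: "\<forall>n. odd n \<longrightarrow> A $ n = 0"
    show "(-1)^n * A $ n = A $ n"
      by (cases "even n") (simp_all add: h)
  qed
  finally show ?thesis .
qed

lemma key_fps:
  assumes g: "oddp g" and D: "fps_refl D = - D"
  shows "(\<forall>n. odd n \<longrightarrow> pdiff g (fps_exp (-1/2) * D) $ n = 0)
     \<longleftrightarrow> pdiff g ((fps_exp (1/2) - fps_exp (-1/2)) * D) = 0"
proof -
  define A where "A = pdiff g (fps_exp (-1/2) * D)"
  define B where "B = pdiff g (fps_exp (1/2) * D)"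
  have e: "fps_refl (fps_exp (-1/2)) = fps_exp (1/2)"
    using fps_refl_exp[of "-1/2"] by simp
  have "fps_refl A = - pdiff g (fps_refl (fps_exp (-1/2) * D))"
    unfolding A_def by (rule pdiff_refl_odd[OF g])
  also have "fps_refl (fps_exp (-1/2) * D) = - (fps_exp (1/2) * D)"
    unfolding fps_refl_mult e D by (rule mult_minus_right)
  finally have rA: "fps_refl A = B"
    unfolding B_def pdiff_uminus minus_minus .
  have "(\<forall>n. odd n \<longrightarrow> A $ n = 0) \<longleftrightarrow> fps_refl A = A"
    by (rule refl_eq_iff_odd0[symmetric])
  also have "\<dots> \<longleftrightarrow> B - A = 0"
    unfolding rA by (rule eq_iff_diff_eq_0)
  also have "B - A = pdiff g ((fps_exp (1/2) - fps_exp (-1/2)) * D)"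
    unfolding A_def B_def pdiff_diff[symmetric] left_diff_distrib ..
  finally show ?thesis unfolding A_def .
qed




definition qf :: "(complex poly \<times> complex) list \<Rightarrow> complex fps" where
  "qf ps = (\<Sum>(p, a)\<leftarrow>ps. fps_of_poly p * fps_exp a)"

definition isqf :: "complex fps \<Rightarrow> bool" where
  "isqf f \<longleftrightarrow> (\<exists>ps. f = qf ps)"

lemma qf_Nil[simp]: "qf [] = 0"
  by (simp add: qf_def)

lemma qf_Cons[simp]: "qf ((p, a) # ps) = fps_of_poly p * fps_exp a + qf ps"
  by (simp add: qf_def)

lemma qf_append: "qf (xs @ ys) = qf xs + qf ys"
  by (simp add: qf_def)

lemma isqf_0: "isqf 0"
  unfolding isqf_def by (rule exI[of _ "[]"]) simp

lemma isqf_add: "isqf f \<Longrightarrow> isqf g \<Longrightarrow> isqf (f + g)"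
  unfolding isqf_def by (metis qf_append)

lemma isqf_term: "isqf (fps_of_poly p * fps_exp a)"
  unfolding isqf_def by (rule exI[of _ "[(p, a)]"]) simp

lemma isqf_const: "isqf (fps_const c)"
  using isqf_term[of "[:c:]" 0] by (simp add: fps_of_poly_const)

lemma qf_const_mult: "fps_const c * qf ps = qf (map (\<lambda>(p, a). (smult c p, a)) ps)"
  by (induction ps) (auto simp: fps_of_poly_smult distrib_left mult.assoc)

lemma isqf_const_mult: "isqf f \<Longrightarrow> isqf (fps_const c * f)"
  unfolding isqf_def by (metis qf_const_mult)

lemma qf_exp_mult: "fps_exp b * qf ps = qf (map (\<lambda>(p, a). (p, a + b)) ps)"
  by (induction ps) (auto simp: distrib_left fps_exp_add_mult mult_ac)

lemma isqf_exp_mult: "isqf f \<Longrightarrow> isqf (fps_exp b * f)"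
  unfolding isqf_def by (metis qf_exp_mult)

lemma isqf_uminus: "isqf f \<Longrightarrow> isqf (- f)"
  using isqf_const_mult[of f "-1"] by (simp add: fps_const_m1)

lemma isqf_diff: "isqf f \<Longrightarrow> isqf g \<Longrightarrow> isqf (f - g)"
  using isqf_add[of f "- g"] isqf_uminus[of g] by simp

lemma pderiv_sum': "pderiv (sum f A) = (\<Sum>i\<in>A. pderiv (f i :: complex poly))"
  by (induction A rule: infinite_finite_induct) (simp_all add: pderiv_add)

lemma poly_antideriv: "\<exists>q. pderiv q = (p :: complex poly)"
proof -
  define q where "q = (\<Sum>i\<le>degree p. monom (coeff p i / of_nat (Suc i)) (Suc i))"
  have "pderiv q = (\<Sum>i\<le>degree p. pderiv (monom (coeff p i / of_nat (Suc i)) (Suc i)))"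
    unfolding q_def by (rule pderiv_sum')
  also have "\<dots> = (\<Sum>i\<le>degree p. monom (coeff p i) i)"
  proof (rule sum.cong)
    fix i assume "i \<in> {..degree p}"
    have "of_nat (Suc i) * (coeff p i / of_nat (Suc i)) = (coeff p i :: complex)"
      by (simp del: of_nat_Suc)
    then show "pderiv (monom (coeff p i / of_nat (Suc i)) (Suc i)) = monom (coeff p i) i"
      by (simp only: pderiv_monom diff_Suc_1)
  qed simp
  also have "\<dots> = p" by (rule poly_as_sum_of_monoms)
  finally show ?thesis by blast
qed

lemma pderiv_const_deg0: "degree (p :: complex poly) = 0 \<Longrightarrow> pderiv p = (0 :: complex poly)"
  by (simp add: pderiv_eq_0_iff)

lemma poly_ode1:
  assumes a: "a \<noteq> 0"
  shows "\<exists>q. pderiv q + smult a q = (p :: complex poly)"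
proof (induction "degree p" arbitrary: p rule: less_induct)
  case less
  show ?case
  proof (cases "degree p = 0")
    case True
    then show ?thesis using a
      by (intro exI[of _ "smult (1/a) p"]) (simp add: pderiv_smult pderiv_const_deg0)
  next
    case False
    define r where "r = smult (1/a) (pderiv p)"
    have "degree r < degree p"
      using False by (simp add: r_def degree_pderiv)
    then obtain q1 where q1: "pderiv q1 + smult a q1 = r"
      using less by blast
    have "pderiv (smult (1/a) p - q1) + smult a (smult (1/a) p - q1) = r + p - (pderiv q1 + smult a q1)"
      using a by (simp add: pderiv_smult pderiv_diff r_def smult_diff_right algebra_simps)
    also have "\<dots> = p" by (simp add: q1)
    finally show ?thesis by blast
  qed
qed

lemma fps_deriv_term:
  "fps_deriv (fps_of_poly (q :: complex poly) * fps_exp a) = fps_of_poly (pderiv q + smult a q) * fps_exp a"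
  by (simp add: fps_of_poly_add fps_of_poly_smult fps_of_poly_pderiv algebra_simps)

lemma term_antideriv: "\<exists>q. fps_deriv (fps_of_poly q * fps_exp a) = fps_of_poly (p :: complex poly) * fps_exp a"
proof (cases "a = 0")
  case True
  obtain q where "pderiv q = p" using poly_antideriv by blast
  then show ?thesis using True by (intro exI[of _ q]) (simp add: fps_of_poly_pderiv[symmetric])
next
  case False
  obtain q where "pderiv q + smult a q = p" using poly_ode1[OF False] by blast
  then show ?thesis using fps_deriv_term[of q a] by (intro exI[of _ q]) simp
qed

lemma isqf_antideriv: "isqf f \<Longrightarrow> \<exists>h. isqf h \<and> fps_deriv h = f"
proof -
  have "\<exists>h. isqf h \<and> fps_deriv h = qf ps" for ps
  proof (induction ps)
    case Nil
    then show ?case using isqf_0 by auto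
  next
    case (Cons x ps)
    obtain p a where x: "x = (p, a)" by (cases x)
    obtain h where h: "isqf h" "fps_deriv h = qf ps" using Cons by blast
    obtain q where q: "fps_deriv (fps_of_poly q * fps_exp a) = fps_of_poly p * fps_exp a"
      using term_antideriv by blast
    have "fps_deriv (fps_of_poly q * fps_exp a + h) = qf (x # ps)"
      by (simp only: fps_deriv_add q h(2) x qf_Cons)
    then show ?case using isqf_add[OF isqf_term h(1)] by blast
  qed
  then show "isqf f \<Longrightarrow> \<exists>h. isqf h \<and> fps_deriv h = f"
    unfolding isqf_def by blast
qed

lemma fps_exp_cancel: "fps_exp a * fps_exp (-a) = (1 :: complex fps)"
  by (simp add: fps_exp_add_mult[symmetric])

lemma ode_first_order:
  assumes E: "fps_deriv E - fps_const a * E = Q" and Q: "isqf Q"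
  shows "isqf E"
proof -
  obtain H where H: "isqf H" "fps_deriv H = fps_exp (-a) * Q"
    using isqf_antideriv[OF isqf_exp_mult[OF Q]] by blast
  define K where "K = fps_exp (-a) * E"
  have "fps_deriv K = fps_exp (-a) * (fps_deriv E - fps_const a * E)"
    by (simp add: K_def algebra_simps fps_const_neg[symmetric] del: fps_const_neg)
  also have "\<dots> = fps_deriv H" using E H by simp
  finally obtain c where c: "K = fps_const c + H"
    using fps_deriv_eq_iff_ex by blast
  have "E = fps_exp a * K"
    by (simp add: K_def mult.assoc[symmetric] fps_exp_cancel)
  also have "\<dots> = fps_exp a * (fps_const c + H)" by (simp add: c)
  finally show ?thesis
    by (simp add: isqf_exp_mult isqf_add isqf_const H)
qed

lemma ode_general:
  fixes g :: "complex poly"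
  assumes "g \<noteq> 0" "pdiff g f = Q" "isqf Q"
  shows "isqf f"
  using assms
proof (induction "degree g" arbitrary: g f Q rule: less_induct)
  case less
  show ?case
  proof (cases "degree g = 0")
    case True
    then obtain c where g: "g = [:c:]" by (metis degree_eq_zeroE)
    with less have c: "c \<noteq> 0" by auto
    from less(3) have Qf: "Q = fps_const c * f" by (simp add: g)
    have "f = fps_const (1/c * c) * f" using c by simp
    also have "\<dots> = fps_const (1/c) * Q"
      unfolding Qf fps_const_mult[symmetric] mult.assoc ..
    finally have "f = fps_const (1/c) * Q" .
    then show ?thesis using isqf_const_mult less(4) by simp
  next
    case False
    then have "\<not> constant (poly g)" by (simp add: constant_degree)
    then obtain z where "poly g z = 0" using fundamental_theorem_of_algebra by blast
    then obtain h where gh: "g = [:-z, 1:] * h" by (metis poly_eq_0_iff_dvd dvdE)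
    have h0: "h \<noteq> 0" using less(2) gh by auto
    have "degree g = degree [:-z, 1:] + degree h" unfolding gh by (rule degree_mult_eq) (simp_all add: h0)
    then have "degree g = 1 + degree h" by simp
    then have dh: "degree h < degree g" by simp
    have "pdiff [:-z, 1:] (pdiff h f) = Q" using less(3) unfolding gh pdiff_mult .
    then have "fps_deriv (pdiff h f) - fps_const z * pdiff h f = Q" by (simp add: pdiff_linear)
    then have "isqf (pdiff h f)" using ode_first_order less(4) by blast
    then show ?thesis using less(1)[OF dh h0 refl] by blast
  qed
qed

definition qfun :: "(complex poly \<times> complex) list \<Rightarrow> complex \<Rightarrow> complex" where
  "qfun ps = (\<lambda>x. \<Sum>(p, a)\<leftarrow>ps. poly p x * exp (a * x))"

lemma qfun_Nil[simp]: "qfun [] = (\<lambda>x. 0)"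
  by (simp add: qfun_def)

lemma qfun_Cons[simp]: "qfun ((p, a) # ps) = (\<lambda>x. poly p x * exp (a * x) + qfun ps x)"
  by (simp add: qfun_def)

lemma poly_has_fps_expansion: "(\<lambda>x. poly p x) has_fps_expansion fps_of_poly (p :: complex poly)"
proof (induction p)
  case 0
  then show ?case by simp
next
  case (pCons a p)
  have "(\<lambda>x. a + poly p x * x) has_fps_expansion fps_const a + fps_of_poly p * fps_X"
    by (intro has_fps_expansion_add has_fps_expansion_mult pCons.IH has_fps_expansion_fps_X) simp
  then show ?case by (simp add: fps_of_poly_pCons mult.commute)
qed

lemma qfun_has_fps_expansion: "qfun ps has_fps_expansion qf ps"
proof (induction ps)
  case Nil
  then show ?case by simp
next
  case (Cons x ps)
  obtain p a where x: "x = (p, a)" by (cases x)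
  have "(\<lambda>z. poly p z * exp (a * z) + qfun ps z) has_fps_expansion fps_of_poly p * fps_exp a + qf ps"
    by (intro has_fps_expansion_add has_fps_expansion_mult poly_has_fps_expansion
          has_fps_expansion_exp Cons.IH)
  then show ?case by (simp add: x)
qed

lemma taylor_qfun: "taylor_fps (qfun ps) = qf ps"
  by (rule fps_ext) (simp add: taylor_fps_def fps_nth_fps_expansion[OF qfun_has_fps_expansion])

lemma qfun_holo: "qfun ps holomorphic_on UNIV"
proof (induction ps)
  case Nil
  then show ?case by (simp add: holomorphic_on_const)
next
  case (Cons x ps)
  obtain p a where x: "x = (p, a)" by (cases x)
  show ?case unfolding x qfun_Cons
    by (intro holomorphic_intros Cons.IH[unfolded holomorphic_on_def, THEN bspec] )
       (use Cons.IH in auto)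
qed

lemma is_quasipoly_qfun: "is_quasipoly (qfun ps)"
  unfolding is_quasipoly_def qfun_def by blast

lemma is_quasipoly_E: "is_quasipoly F \<Longrightarrow> \<exists>ps. F = qfun ps"
  unfolding is_quasipoly_def qfun_def by blast

definition qrefl :: "(complex poly \<times> complex) list \<Rightarrow> (complex poly \<times> complex) list" where
  "qrefl ps = map (\<lambda>(p, a). (pcompose p [:0, -1:], - a)) ps"

definition qhalf :: "(complex poly \<times> complex) list \<Rightarrow> (complex poly \<times> complex) list" where
  "qhalf ps = map (\<lambda>(p, a). (smult (1/2) p, a)) ps"

lemma fps_refl_poly: "fps_refl (fps_of_poly p) = fps_of_poly (pcompose p [:0, -1:])"
  by (rule fps_ext) (simp add: coeff_pcompose_linear)

lemma qf_qrefl: "qf (qrefl ps) = fps_refl (qf ps)"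
  by (induction ps) (auto simp: qrefl_def fps_refl_add fps_refl_mult fps_refl_exp fps_refl_poly)

lemma qfun_qrefl: "qfun (qrefl ps) x = qfun ps (- x)"
  by (induction ps) (auto simp: qrefl_def poly_pcompose)

lemma qf_qhalf: "qf (qhalf ps) = fps_const (1/2) * qf ps"
  by (simp add: qhalf_def qf_const_mult)

lemma qfun_qhalf: "qfun (qhalf ps) x = qfun ps x / 2"
  by (induction ps) (auto simp: qhalf_def)

lemma qfun_append: "qfun (xs @ ys) x = qfun xs x + qfun ys x"
  by (simp add: qfun_def)

lemma even_quasi:
  assumes "fps_refl (qf ps) = qf ps"
  shows "\<exists>ps'. qf ps' = qf ps \<and> (\<forall>x. qfun ps' (- x) = qfun ps' x)"
proof -
  define ps' where "ps' = qhalf ps @ qhalf (qrefl ps)"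
  have "qf ps' = fps_const (1/2) * qf ps + fps_const (1/2) * qf ps"
    by (simp add: ps'_def qf_append qf_qhalf qf_qrefl assms)
  also have "\<dots> = qf ps"
    by (simp add: distrib_right[symmetric] fps_const_add[symmetric] del: fps_const_add)
  finally have 1: "qf ps' = qf ps" .
  have "qfun ps' (- x) = qfun ps' x" for x
    by (simp add: ps'_def qfun_append qfun_qhalf qfun_qrefl)
  with 1 show ?thesis by blast
qed

lemma pderiv_iter_zero: "degree (p :: complex poly) < k \<Longrightarrow> (pderiv ^^ k) p = 0"
proof (induction k arbitrary: p)
  case 0
  then show ?case by simp
next
  case (Suc k)
  have e: "(pderiv ^^ Suc k) p = (pderiv ^^ k) (pderiv p)"
    by (simp add: funpow_Suc_right del: funpow.simps)
  show ?case
  proof (cases "degree p = 0")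
    case True
    then have "pderiv p = 0" by (simp add: pderiv_eq_0_iff)
    moreover have "(pderiv ^^ k) (0 :: complex poly) = 0" by (induction k) simp_all
    ultimately show ?thesis using e by simp
  next
    case False
    then have "degree (pderiv p) < k" using Suc.prems by (simp add: degree_pderiv)
    then show ?thesis using e Suc.IH by simp
  qed
qed

lemma pdiff_term_pow:
  "pdiff ([:-a, 1:] ^ k) (fps_of_poly p * fps_exp a) = fps_of_poly ((pderiv ^^ k) p) * fps_exp a"
proof (induction k)
  case 0
  then show ?case by simp
next
  case (Suc k)
  have "pdiff ([:-a, 1:] ^ Suc k) (fps_of_poly p * fps_exp a)
      = pdiff [:-a, 1:] (fps_of_poly ((pderiv ^^ k) p) * fps_exp a)"
    by (simp only: power_Suc pdiff_mult Suc.IH)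
  also have "\<dots> = fps_of_poly ((pderiv ^^ Suc k) p) * fps_exp a"
    by (simp add: pdiff_linear fps_of_poly_pderiv algebra_simps)
  finally show ?case .
qed

lemma pdiff_annihil:
  assumes "\<forall>(p, a)\<in>set ps. [:-a, 1:] ^ Suc (degree p) dvd g"
  shows "pdiff g (qf ps) = 0"
  using assms
proof (induction ps)
  case Nil
  then show ?case by simp
next
  case (Cons x ps)
  obtain p a where x: "x = (p, a)" by (cases x)
  from Cons.prems obtain M where M: "g = [:-a, 1:] ^ Suc (degree p) * M"
    by (auto simp: x elim!: dvdE)
  have "pdiff g (fps_of_poly p * fps_exp a) = pdiff M (fps_of_poly ((pderiv ^^ Suc (degree p)) p) * fps_exp a)"
    by (simp only: M mult.commute[of "[:-a, 1:] ^ Suc (degree p)"] pdiff_mult pdiff_term_pow)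
  also have "(pderiv ^^ Suc (degree p)) p = 0" by (rule pderiv_iter_zero) simp
  then have "pdiff M (fps_of_poly ((pderiv ^^ Suc (degree p)) p) * fps_exp a) = 0" by simp
  finally show ?case using Cons by (simp add: x pdiff_add)
qed

definition evp :: "complex poly \<Rightarrow> bool" where
  "evp e \<longleftrightarrow> pcompose e [:0, -1:] = e"

lemma oddp_I:
  assumes "pcompose g [:0, -1:] = - g"
  shows "oddp g"
  unfolding oddp_def
proof (intro allI impI)
  fix i :: nat assume "even i"
  have "coeff (pcompose g [:0, -1:]) i = coeff (- g) i" by (simp add: assms)
  then have "coeff g i = - coeff g i" using \<open>even i\<close> by (simp add: coeff_pcompose_linear)
  then show "coeff g i = 0" by simp
qed

lemma evp_mult: "evp a \<Longrightarrow> evp b \<Longrightarrow> evp (a * b)"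
  by (simp add: evp_def pcompose_mult)

lemma evp_one: "evp 1"
  unfolding evp_def one_pCons by (rule pcompose_const)

lemma evp_power: "evp a \<Longrightarrow> evp (a ^ k)"
  by (induction k) (simp_all add: evp_one evp_mult)

lemma evp_prod_list: "(\<forall>x\<in>set xs. evp x) \<Longrightarrow> evp (prod_list xs)"
  by (induction xs) (simp_all add: evp_one evp_mult)

lemma evp_quad: "evp ([:-a, 1:] * [:a, 1:])"
  by (simp add: evp_def pcompose_pCons)

definition annih :: "(complex poly \<times> complex) list \<Rightarrow> complex poly" where
  "annih ps = [:0, 1:] * prod_list (map (\<lambda>(p, a). ([:-a, 1:] * [:a, 1:]) ^ Suc (degree p)) ps)"

lemma dvd_prod_list_mem: "x \<in> set xs \<Longrightarrow> x dvd prod_list (xs :: complex poly list)"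
  by (induction xs) auto

lemma annih_props: "annih ps \<noteq> 0 \<and> oddp (annih ps) \<and> pdiff (annih ps) (qf ps) = 0"
proof (intro conjI)
  define P where "P = prod_list (map (\<lambda>(p, a). ([:-a, 1:] * [:a, 1:]) ^ Suc (degree p)) ps)"
  have nz: "([:-a, 1:] * [:a, 1:]) ^ k \<noteq> 0" for a :: complex and k
    by (simp only: power_eq_0_iff mult_eq_0_iff pCons_eq_0_iff) simp
  have "0 \<notin> set (map (\<lambda>(p, a). ([:-a, 1:] * [:a, 1:]) ^ Suc (degree p)) ps)"
  proof
    assume "0 \<in> set (map (\<lambda>(p, a). ([:-a, 1:] * [:a, 1:]) ^ Suc (degree p)) ps)"
    then obtain x where "x \<in> set ps" "(\<lambda>(p, a). ([:-a, 1:] * [:a, 1:]) ^ Suc (degree p)) x = 0"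
      by (auto simp del: mult_pCons_left mult_pCons_right power_Suc)
    then show False using nz[of "snd x" "Suc (degree (fst x))"]
      by (simp add: case_prod_beta del: mult_pCons_left mult_pCons_right power_Suc)
  qed
  then have P0: "P \<noteq> 0"
    unfolding P_def prod_list_zero_iff by blast
  then show "annih ps \<noteq> 0" by (simp add: annih_def P_def)
  have "evp P" unfolding P_def
    by (rule evp_prod_list) (auto intro!: evp_power evp_quad simp del: mult_pCons_left mult_pCons_right power_Suc)
  then show "oddp (annih ps)"
    unfolding annih_def P_def[symmetric]
    by (intro oddp_I) (simp add: evp_def pcompose_mult pcompose_pCons)
  show "pdiff (annih ps) (qf ps) = 0"
  proof (rule pdiff_annihil, clarify)
    fix p a assume pa: "(p, a) \<in> set ps"
    have "([:-a, 1:] * [:a, 1:]) ^ Suc (degree p) dvd P"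
      unfolding P_def by (rule dvd_prod_list_mem) (use pa in force)
    then have "[:-a, 1:] ^ Suc (degree p) dvd P"
      by (metis dvd_mult_left power_mult_distrib)
    then show "[:-a, 1:] ^ Suc (degree p) dvd annih ps"
      unfolding annih_def P_def[symmetric] by (rule dvd_mult)
  qed
qed

lemma final_forward_fps:
  assumes D: "fps_refl D = - D" and g: "g \<noteq> 0" "oddp g"
    and c: "\<forall>n. odd n \<longrightarrow> pdiff g (fps_exp (-1/2) * D) $ n = 0"
  shows "\<exists>F. is_quasipoly F \<and> (\<forall>x. F (- x) = F x) \<and> F 0 = 0 \<and>
           taylor_fps F = (fps_exp (1/2) - fps_exp (-1/2)) * D"
proof -
  define \<Phi> where "\<Phi> = (fps_exp (1/2) - fps_exp (-1/2)) * D"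
  have "pdiff g \<Phi> = 0" using key_fps[OF g(2) D] c by (simp add: \<Phi>_def)
  then have "isqf \<Phi>" using ode_general[OF g(1)] isqf_0 by blast
  then obtain ps where ps: "\<Phi> = qf ps" by (auto simp: isqf_def)
  have e: "fps_refl (fps_exp (-1/2)) = fps_exp (1/2)"
    using fps_refl_exp[of "-1/2"] by simp
  have "fps_refl \<Phi> = (fps_exp (-1/2) - fps_exp (1/2)) * (- D)"
    by (simp add: \<Phi>_def fps_refl_mult fps_refl_diff e D fps_refl_exp)
  also have "\<dots> = \<Phi>" by (simp add: \<Phi>_def algebra_simps)
  finally have "fps_refl (qf ps) = qf ps" by (simp add: ps)
  then obtain ps' where ps': "qf ps' = qf ps" "\<forall>x. qfun ps' (- x) = qfun ps' x"
    using even_quasi by blast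
  have t: "taylor_fps (qfun ps') = \<Phi>" by (simp add: taylor_qfun ps' ps)
  have "qfun ps' 0 = taylor_fps (qfun ps') $ 0" by (simp add: taylor_fps_def)
  also have "\<dots> = 0" by (simp add: t \<Phi>_def)
  finally show ?thesis
    using is_quasipoly_qfun[of ps'] ps'(2) t unfolding \<Phi>_def by blast
qed

lemma final_reverse_fps:
  assumes D: "fps_refl D = - D" and F: "is_quasipoly F"
    and T: "taylor_fps F = (fps_exp (1/2) - fps_exp (-1/2)) * D"
  shows "\<exists>g. g \<noteq> 0 \<and> oddp g \<and> (\<forall>n. odd n \<longrightarrow> pdiff g (fps_exp (-1/2) * D) $ n = 0)"
proof -
  obtain ps where "F = qfun ps" using is_quasipoly_E[OF F] by blast
  then have "qf ps = (fps_exp (1/2) - fps_exp (-1/2)) * D" using T by (simp add: taylor_qfun)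
  moreover have "annih ps \<noteq> 0" "oddp (annih ps)" "pdiff (annih ps) (qf ps) = 0"
    using annih_props by blast+
  ultimately show ?thesis using key_fps[OF _ D] by metis
qed

lemma DeltaFps_odd: "fps_refl (DeltaFps \<Lambda>) = - DeltaFps \<Lambda>"
  by (rule fps_ext) (simp add: DeltaFps_def)




definition homf :: "int \<Rightarrow> complex poly \<Rightarrow> dop" where
  "homf d f = (\<lambda>k. if k = d then f else 0)"

definition hom :: "int \<Rightarrow> complex poly \<Rightarrow> dhat" where
  "hom d f = (homf d f, 0)"

definition cen :: "complex \<Rightarrow> dhat" where
  "cen c = ((\<lambda>k. 0), c)"

definition par :: "int \<Rightarrow> complex poly \<Rightarrow> bool" where
  "par d f \<longleftrightarrow> pcompose f [:- of_int d - 1, -1:] = - f"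

definition sh :: "complex poly \<Rightarrow> int \<Rightarrow> complex poly" where
  "sh f s = pcompose f [:of_int s, 1:]"

definition brp :: "int \<Rightarrow> complex poly \<Rightarrow> int \<Rightarrow> complex poly \<Rightarrow> complex poly" where
  "brp r f s g = sh f s * g - f * sh g r"

lemma shiftp_sh: "shiftp = sh"
  by (auto simp: fun_eq_iff shiftp_def sh_def)

lemma comp_lin: "pcompose [:a, b:] [:c, e:] = [:a + b * c, b * e:]"
  by (simp add: pcompose_pCons)

lemma sh_0[simp]: "sh 0 s = 0"
  by (simp add: sh_def)

lemma sh_zero_shift[simp]: "sh f 0 = f"
  by (simp add: sh_def)

lemma sh_add: "sh (f + g) s = sh f s + sh g s"
  by (simp add: sh_def pcompose_add)

lemma sh_diff: "sh (f - g) s = sh f s - sh g s"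
  by (simp add: sh_def pcompose_diff)

lemma sh_mult: "sh (f * g) s = sh f s * sh g s"
  by (simp add: sh_def pcompose_mult)

lemma sh_smult: "sh (smult c f) s = smult c (sh f s)"
  by (simp add: sh_def pcompose_smult)

lemma sh_uminus: "sh (- f) s = - sh f s"
  by (simp add: sh_def pcompose_uminus)

lemma sh_sh: "sh (sh f a) b = sh f (a + b)"
  by (simp add: sh_def pcompose_assoc[symmetric] comp_lin add.commute)

lemma pcompose_1[simp]: "pcompose 1 q = 1"
  by (metis one_pCons pcompose_const)

lemma sh_1[simp]: "sh 1 s = 1"
  by (simp add: sh_def)

lemma sh_prod: "sh (prod F A) s = (\<Prod>i\<in>A. sh (F i) s)"
  by (induction A rule: infinite_finite_induct) (simp_all add: sh_mult)

lemma sh_sum: "sh (sum F A) s = (\<Sum>i\<in>A. sh (F i) s)"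
  by (induction A rule: infinite_finite_induct) (simp_all add: sh_add)

lemma supp_homf: "supp (homf d f) \<subseteq> {d}"
  by (auto simp: supp_def homf_def split: if_splits)

lemma homf_Dplus: "par d f \<Longrightarrow> homf d f \<in> Dplus"
  unfolding Dplus_def
  using finite_subset[OF supp_homf] by (auto simp: homf_def par_def)

lemma zero_Dplus: "(\<lambda>k. 0) \<in> Dplus"
  by (simp add: Dplus_def supp_def)

lemma hom_in: "par d f \<Longrightarrow> hom d f \<in> DhatPlus"
  by (simp add: hom_def DhatPlus_def homf_Dplus)

lemma cen_in: "cen c \<in> DhatPlus"
  by (simp add: cen_def DhatPlus_def zero_Dplus)

lemma hom_zero_in: "par 0 f \<Longrightarrow> hom 0 f \<in> DhatPlus_zero"
  unfolding DhatPlus_zero_def hom_def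
  using homf_Dplus[of 0 f] by (auto simp: homf_def)

lemma cen_zero_in: "cen c \<in> DhatPlus_zero"
  unfolding DhatPlus_zero_def cen_def using zero_Dplus by auto

lemma hom_pos_in: "0 < d \<Longrightarrow> par d f \<Longrightarrow> hom d f \<in> DhatPlus_pos"
  unfolding DhatPlus_pos_def hom_def
  using homf_Dplus[of d f] by (auto simp: homf_def)

lemma mono0_hom: "mono0 f = hom 0 f"
  by (simp add: mono0_def hom_def homf_def)

lemma addHat_hom: "addHat (hom d f) (hom d g) = hom d (f + g)"
  by (auto simp: addHat_def hom_def homf_def)

lemma scaleHat_hom: "scaleHat c (hom d f) = hom d (smult c f)"
  by (auto simp: scaleHat_def hom_def homf_def)

lemma hom_0: "hom d 0 = cen 0"
  by (auto simp: hom_def homf_def cen_def)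

lemma addHat_hom_cen: "addHat (hom d f) (cen c) = (homf d f, c)"
  by (auto simp: addHat_def hom_def homf_def cen_def)

lemma par_0[simp]: "par d 0"
  by (simp add: par_def)

lemma par_add: "par d f \<Longrightarrow> par d g \<Longrightarrow> par d (f + g)"
  by (simp add: par_def pcompose_add)

lemma par_smult: "par d f \<Longrightarrow> par d (smult c f)"
  by (simp add: par_def pcompose_smult)

lemma par_uminus: "par d f \<Longrightarrow> par d (- f)"
  by (simp add: par_def pcompose_uminus)

lemma par_diff: "par d f \<Longrightarrow> par d g \<Longrightarrow> par d (f - g)"
  by (simp add: par_def pcompose_diff)

lemma par_sum: "(\<And>i. i \<in> A \<Longrightarrow> par d (F i)) \<Longrightarrow> par d (sum F A)"
  by (induction A rule: infinite_finite_induct) (simp_all add: par_add)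

lemma psi_mono_0: "psi_mono r f 0 = 0"
  by (simp add: psi_mono_def)

lemma psi_mono_0_left: "psi_mono r 0 g = 0"
  by (simp add: psi_mono_def)

lemma brD_homf: "brD (homf r f) (homf s g) = homf (r + s) (brp r f s g)"
proof (cases "f = 0")
  case True
  then have "supp (homf r f) = {}" by (simp add: supp_def homf_def)
  then show ?thesis using True by (auto simp: brD_def homf_def brp_def fun_eq_iff)
next
  case False
  then have "supp (homf r f) = {r}" by (auto simp: supp_def homf_def)
  then show ?thesis
    by (auto simp: brD_def homf_def brp_def fun_eq_iff shiftp_sh)
qed

lemma psi_homf: "psi (homf r f) (homf s g) = (if r + s = 0 then psi_mono r f g else 0)"
proof (cases "f = 0")
  case True
  then have "supp (homf r f) = {}" by (simp add: supp_def homf_def)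
  then show ?thesis using True by (simp add: psi_def psi_mono_0_left)
next
  case False
  then have "supp (homf r f) = {r}" by (auto simp: supp_def homf_def)
  then show ?thesis
    by (auto simp: psi_def homf_def psi_mono_0)
qed

lemma addHat_pair_cen: "addHat (a, 0) (cen c) = (a, c)"
  by (simp add: addHat_def cen_def)

lemma brHat_hom: "brHat (hom r f) (hom s g) =
   addHat (hom (r + s) (brp r f s g)) (cen (if r + s = 0 then psi_mono r f g else 0))"
  by (simp add: brHat_def addHat_pair_cen hom_def brD_homf psi_homf)

lemma brHat_cen_left: "brHat (cen c) y = cen 0"
  by (simp add: brHat_def cen_def brD_def psi_def supp_def)

lemma brHat_cen_right: "brHat x (cen c) = cen 0"
  by (simp add: brHat_def cen_def brD_def psi_def psi_mono_0 fun_eq_iff shiftp_sh)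

lemma c1: "pcompose [:of_int s, 1:] [:- of_int (r + s) - 1, -1 :: complex:] = [:- of_int r - 1, -1:]"
  by (simp add: comp_lin)

lemma c2: "pcompose [:- of_int s - 1, -1:] [:of_int r, 1 :: complex:] = [:- of_int (r + s) - 1, -1:]"
  by (simp add: comp_lin)

lemma c3: "pcompose [:- of_int r - 1, -1:] [:of_int s, 1 :: complex:] = [:- of_int (r + s) - 1, -1:]"
  by (simp add: comp_lin)

lemma c4: "pcompose [:of_int r, 1:] [:- of_int (r + s) - 1, -1 :: complex:] = [:- of_int s - 1, -1:]"
  by (simp add: comp_lin)

lemma par_brp:
  assumes f: "par r f" and g: "par s g"
  shows "par (r + s) (brp r f s g)"
proof -
  define t where "t = [:- of_int (r + s) - 1, -1 :: complex:]"
  have 1: "pcompose (sh f s) t = - f"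
    using f unfolding sh_def t_def pcompose_assoc[symmetric] c1 par_def .
  have 2: "pcompose g t = - sh g r"
  proof -
    have "pcompose g t = pcompose (pcompose g [:- of_int s - 1, -1:]) [:of_int r, 1:]"
      unfolding t_def pcompose_assoc[symmetric] c2 ..
    then show ?thesis using g by (simp add: par_def sh_def pcompose_uminus)
  qed
  have 3: "pcompose f t = - sh f s"
  proof -
    have "pcompose f t = pcompose (pcompose f [:- of_int r - 1, -1:]) [:of_int s, 1:]"
      unfolding t_def pcompose_assoc[symmetric] c3 ..
    then show ?thesis using f by (simp add: par_def sh_def pcompose_uminus)
  qed
  have 4: "pcompose (sh g r) t = - g"
    using g unfolding sh_def t_def pcompose_assoc[symmetric] c4 par_def .
  show ?thesis
    unfolding par_def t_def[symmetric] brp_def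
    by (simp add: pcompose_diff pcompose_mult 1 2 3 4)
qed




definition wdeg :: "(int \<times> complex poly) list \<Rightarrow> int" where
  "wdeg ws = sum_list (map fst ws)"

definition negw :: "(int \<times> complex poly) list \<Rightarrow> bool" where
  "negw ws \<longleftrightarrow> (\<forall>(d, f)\<in>set ws. d < 0 \<and> par d f)"

definition parw :: "(int \<times> complex poly) list \<Rightarrow> bool" where
  "parw ws \<longleftrightarrow> (\<forall>(d, f)\<in>set ws. par d f)"

lemma wdeg_Nil[simp]: "wdeg [] = 0" by (simp add: wdeg_def)
lemma wdeg_Cons[simp]: "wdeg ((d, f) # ws) = d + wdeg ws" by (simp add: wdeg_def)
lemma negw_Nil[simp]: "negw []" by (simp add: negw_def)
lemma negw_Cons[simp]: "negw ((d, f) # ws) \<longleftrightarrow> d < 0 \<and> par d f \<and> negw ws" by (simp add: negw_def)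
lemma parw_Nil[simp]: "parw []" by (simp add: parw_def)
lemma parw_Cons[simp]: "parw ((d, f) # ws) \<longleftrightarrow> par d f \<and> parw ws" by (simp add: parw_def)
lemma negw_parw: "negw ws \<Longrightarrow> parw ws"
  by (auto simp: negw_def parw_def)

lemma negw_deg: "negw ws \<Longrightarrow> wdeg ws \<le> - int (length ws)"
proof (induction ws)
  case Nil
  then show ?case by simp
next
  case (Cons x ws)
  then show ?case by (cases x) auto
qed

definition halfD_el :: dhat where "halfD_el = hom 0 halfD"

lemma par_halfD: "par 0 halfD"
  by (simp add: par_def halfD_def pcompose_pCons)

lemma brp_halfD: "brp 0 halfD d f = smult (of_int d) f"
proof -
  have "sh halfD d - halfD = [:of_int d:]"
    by (simp add: sh_def halfD_def pcompose_pCons)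
  then show ?thesis
    by (simp add: brp_def left_diff_distrib[symmetric])
qed

lemma psi_mono_r0: "psi_mono 0 f g = 0"
  by (simp add: psi_mono_def)

locale qfrep =
  fixes sc :: "complex \<Rightarrow> 'v::ab_group_add \<Rightarrow> 'v"
    and \<pi> :: "dhat \<Rightarrow> 'v \<Rightarrow> 'v"
    and \<Lambda> :: "dhat \<Rightarrow> complex"
    and v :: 'v
  assumes rep: "is_rep sc \<pi>" and lin: "linear_on_zero \<Lambda>"
    and hw: "hw_vector sc \<pi> \<Lambda> v" and irr: "irreducible_rep sc \<pi>"
begin

lemma VS: "vector_space sc" using rep by (simp add: is_rep_def)

sublocale vector_space sc by (rule VS)

lemma pi_add: "x \<in> DhatPlus \<Longrightarrow> \<pi> x (u + w) = \<pi> x u + \<pi> x w"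
  using rep by (simp add: is_rep_def)

lemma pi_sc: "x \<in> DhatPlus \<Longrightarrow> \<pi> x (sc c u) = sc c (\<pi> x u)"
  using rep by (simp add: is_rep_def)

lemma pi_addHat: "x \<in> DhatPlus \<Longrightarrow> y \<in> DhatPlus \<Longrightarrow> \<pi> (addHat x y) u = \<pi> x u + \<pi> y u"
  using rep by (simp add: is_rep_def)

lemma pi_scaleHat: "x \<in> DhatPlus \<Longrightarrow> \<pi> (scaleHat c x) u = sc c (\<pi> x u)"
  using rep by (simp add: is_rep_def)

lemma pi_br: "x \<in> DhatPlus \<Longrightarrow> y \<in> DhatPlus \<Longrightarrow> \<pi> x (\<pi> y u) = \<pi> (brHat x y) u + \<pi> y (\<pi> x u)"
  using rep by (simp add: is_rep_def)

lemma pi_additive: "x \<in> DhatPlus \<Longrightarrow> Modules.additive (\<pi> x)"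
  by unfold_locales (rule pi_add)

lemma pi_zero: "x \<in> DhatPlus \<Longrightarrow> \<pi> x 0 = 0"
  using Modules.additive.zero[OF pi_additive] by blast

lemma pi_diff: "x \<in> DhatPlus \<Longrightarrow> \<pi> x (u - w) = \<pi> x u - \<pi> x w"
  using Modules.additive.diff[OF pi_additive] by blast

lemma pi_sum: "x \<in> DhatPlus \<Longrightarrow> \<pi> x (sum f A) = (\<Sum>a\<in>A. \<pi> x (f a))"
  using Modules.additive.sum[OF pi_additive] by blast

lemma pi_span:
  assumes x: "x \<in> DhatPlus" and G: "\<And>g. g \<in> G \<Longrightarrow> \<pi> x g \<in> span H" and u: "u \<in> span G"
  shows "\<pi> x u \<in> span H"
proof -
  have "subspace {u. \<pi> x u \<in> span H}"
    unfolding subspace_def using x by (auto simp: pi_zero pi_add pi_sc span_add span_scale span_zero)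
  then show ?thesis using span_subspace_induct[OF u, of "{u. \<pi> x u \<in> span H}"] G by blast
qed

lemma pi_subspace:
  assumes x: "x \<in> DhatPlus" and W: "subspace W" and G: "\<And>g. g \<in> G \<Longrightarrow> \<pi> x g \<in> W" and u: "u \<in> span G"
  shows "\<pi> x u \<in> W"
proof -
  have "\<pi> x u \<in> span W" using pi_span[OF x _ u, of W] G span_base by blast
  then show ?thesis using W by (simp add: span_eq_iff[THEN iffD2])
qed

lemma cen0_add: "cen 0 = addHat (cen 0) (cen 0)"
  by (simp add: cen_def addHat_def)

lemma pi_cen0: "\<pi> (cen 0) u = 0"
  using pi_addHat[OF cen_in cen_in, of 0 0 u] by (simp flip: cen0_add)

lemma pi_hom0: "\<pi> (hom d 0) u = 0"
  by (simp add: hom_0 pi_cen0)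

lemma pi_hom_add: "par d f \<Longrightarrow> par d g \<Longrightarrow> \<pi> (hom d (f + g)) u = \<pi> (hom d f) u + \<pi> (hom d g) u"
  by (simp add: addHat_hom[symmetric] pi_addHat hom_in)

lemma pi_hom_smult: "par d f \<Longrightarrow> \<pi> (hom d (smult c f)) u = sc c (\<pi> (hom d f) u)"
  by (simp add: scaleHat_hom[symmetric] pi_scaleHat hom_in)

lemma pi_hom_sum: "(\<And>i. i \<in> A \<Longrightarrow> par d (F i)) \<Longrightarrow> \<pi> (hom d (sum F A)) u = (\<Sum>i\<in>A. \<pi> (hom d (F i)) u)"
proof (induction A rule: infinite_finite_induct)
  case (infinite A)
  then show ?case by (simp add: pi_hom0)
next
  case empty
  then show ?case by (simp add: pi_hom0)
next
  case (insert x F)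
  then show ?case by (simp add: pi_hom_add par_sum)
qed

lemma pi_hom_diff: "par d f \<Longrightarrow> par d g \<Longrightarrow> \<pi> (hom d (f - g)) u = \<pi> (hom d f) u - \<pi> (hom d g) u"
proof -
  assume f: "par d f" and g: "par d g"
  have "\<pi> (hom d (f - g)) u + \<pi> (hom d g) u = \<pi> (hom d f) u"
    using pi_hom_add[OF par_diff[OF f g] g] by simp
  then show ?thesis by (simp add: eq_diff_eq)
qed

lemma pi_comm_hom:
  assumes "par r f" "par s g"
  shows "\<pi> (hom r f) (\<pi> (hom s g) u) = \<pi> (hom (r + s) (brp r f s g)) u
     + \<pi> (cen (if r + s = 0 then psi_mono r f g else 0)) u + \<pi> (hom s g) (\<pi> (hom r f) u)"
proof -
  have "\<pi> (hom r f) (\<pi> (hom s g) u) = \<pi> (brHat (hom r f) (hom s g)) u + \<pi> (hom s g) (\<pi> (hom r f) u)"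
    by (rule pi_br[OF hom_in[OF assms(1)] hom_in[OF assms(2)]])
  then show ?thesis
    using assms by (simp add: brHat_hom pi_addHat cen_in hom_in par_brp)
qed

lemma pi_comm_hom_ne:
  assumes "par r f" "par s g" "r + s \<noteq> 0"
  shows "\<pi> (hom r f) (\<pi> (hom s g) u) = \<pi> (hom (r + s) (brp r f s g)) u + \<pi> (hom s g) (\<pi> (hom r f) u)"
  using pi_comm_hom[OF assms(1,2), of u] assms(3) by (simp add: pi_cen0)

lemma pi_cen_comm: "y \<in> DhatPlus \<Longrightarrow> \<pi> (cen c) (\<pi> y u) = \<pi> y (\<pi> (cen c) u)"
  using pi_br[OF cen_in, of y c u] by (simp add: brHat_cen_left pi_cen0)

lemma v_nz: "v \<noteq> 0" using hw by (simp add: hw_vector_def)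

lemma v_pos: "0 < d \<Longrightarrow> par d f \<Longrightarrow> \<pi> (hom d f) v = 0"
  using hw hom_pos_in by (simp add: hw_vector_def)

lemma v_zero: "par 0 f \<Longrightarrow> \<pi> (hom 0 f) v = sc (\<Lambda> (hom 0 f)) v"
  using hw hom_zero_in by (simp add: hw_vector_def)

lemma v_cen: "\<pi> (cen c) v = sc (\<Lambda> (cen c)) v"
  using hw cen_zero_in by (simp add: hw_vector_def)

lemma v_gen: "invariant_subspace sc \<pi> W \<Longrightarrow> v \<in> W \<Longrightarrow> W = UNIV"
  using hw by (simp add: hw_vector_def)

abbreviation E :: "int \<Rightarrow> 'v set" where "E j \<equiv> grade_space sc \<pi> \<Lambda> j"

definition lam0 where "lam0 = \<Lambda> halfD_el"

lemma E_iff: "w \<in> E j \<longleftrightarrow> \<pi> halfD_el w = sc (lam0 + of_int j) w"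
  by (simp add: grade_space_def lam0_def halfD_el_def mono0_hom)

lemma halfD_in: "halfD_el \<in> DhatPlus"
  by (simp add: halfD_el_def hom_in par_halfD)

lemma E_subspace: "subspace (E j)"
proof (unfold subspace_def, intro conjI ballI allI)
  show "0 \<in> E j" by (simp add: E_iff pi_zero halfD_in)
next
  fix x y assume "x \<in> E j" "y \<in> E j"
  then show "x + y \<in> E j" by (simp add: E_iff pi_add halfD_in scale_right_distrib)
next
  fix c x assume "x \<in> E j"
  then show "sc c x \<in> E j" by (simp add: E_iff pi_sc halfD_in mult.commute)
qed

lemma eig_hom:
  assumes f: "par d f" and w: "w \<in> E j"
  shows "\<pi> (hom d f) w \<in> E (j + d)"
proof -
  have "\<pi> halfD_el (\<pi> (hom d f) w) = \<pi> (hom d (smult (of_int d) f)) w + \<pi> (hom d f) (\<pi> halfD_el w)"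
    using pi_comm_hom[OF par_halfD f, of w] by (simp add: halfD_el_def brp_halfD psi_mono_r0 pi_cen0)
  also have "\<dots> = sc (of_int d) (\<pi> (hom d f) w) + sc (lam0 + of_int j) (\<pi> (hom d f) w)"
    using w f by (simp add: E_iff pi_hom_smult pi_sc hom_in)
  also have "\<dots> = sc (of_int d + (lam0 + of_int j)) (\<pi> (hom d f) w)"
    by (simp only: scale_left_distrib)
  also have "of_int d + (lam0 + of_int j) = lam0 + of_int (j + d)"
    by simp
  finally have "\<pi> halfD_el (\<pi> (hom d f) w) = sc (lam0 + of_int (j + d)) (\<pi> (hom d f) w)" .
  then show ?thesis by (simp only: E_iff)
qed

lemma eig_cen: "w \<in> E j \<Longrightarrow> \<pi> (cen c) w \<in> E j"
  by (simp add: E_iff pi_cen_comm[OF halfD_in, symmetric] pi_sc cen_in)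

lemma v_E0: "v \<in> E 0"
  unfolding E_iff lam0_def halfD_el_def using v_zero[OF par_halfD] by simp

fun wact :: "(int \<times> complex poly) list \<Rightarrow> 'v \<Rightarrow> 'v" where
  "wact [] u = u"
| "wact ((d, f) # ws) u = \<pi> (hom d f) (wact ws u)"

lemma wact_E: "parw ws \<Longrightarrow> w \<in> E j \<Longrightarrow> wact ws w \<in> E (j + wdeg ws)"
proof (induction ws)
  case Nil
  then show ?case by simp
next
  case (Cons x ws)
  obtain d f where x: "x = (d, f)" by (cases x)
  have 1: "wact ws w \<in> E (j + wdeg ws)" using Cons by (simp add: x)
  have 2: "par d f" using Cons.prems by (simp add: x)
  have 3: "j + wdeg ws + d = j + wdeg (x # ws)" by (simp add: x)
  show ?case using eig_hom[OF 2 1] by (simp only: 3 x wact.simps)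
qed

lemma wact_sc: "parw ws \<Longrightarrow> wact ws (sc c u) = sc c (wact ws u)"
proof (induction ws)
  case Nil
  then show ?case by simp
next
  case (Cons x ws)
  then show ?case by (cases x) (simp add: pi_sc hom_in)
qed

end




context qfrep
begin

definition SW :: "'v set \<Rightarrow> 'v set" where
  "SW T = span {wact ws t | ws t. negw ws \<and> t \<in> T}"

lemma SW_base: "t \<in> T \<Longrightarrow> t \<in> SW T"
  unfolding SW_def by (rule span_base) (auto intro!: exI[of _ "[]"])

lemma SW_gen: "negw ws \<Longrightarrow> t \<in> T \<Longrightarrow> wact ws t \<in> SW T"
  unfolding SW_def by (rule span_base) auto

lemma SW_neg:
  assumes d: "d < 0" "par d f" and u: "u \<in> SW T"
  shows "\<pi> (hom d f) u \<in> SW T"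
proof -
  have "\<pi> (hom d f) u \<in> span {wact ws t | ws t. negw ws \<and> t \<in> T}"
  proof (rule pi_span[OF hom_in[OF d(2)] _ u[unfolded SW_def]])
    fix g assume "g \<in> {wact ws t | ws t. negw ws \<and> t \<in> T}"
    then obtain ws t where "g = wact ws t" "negw ws" "t \<in> T" by blast
    then have "\<pi> (hom d f) g = wact ((d, f) # ws) t" "negw ((d, f) # ws)" using d by auto
    then show "\<pi> (hom d f) g \<in> span {wact ws t | ws t. negw ws \<and> t \<in> T}"
      using \<open>t \<in> T\<close> by (intro span_base) blast
  qed
  then show ?thesis by (simp add: SW_def)
qed

lemma SW_nonneg_gen:
  assumes hT: "\<And>e f u. 0 \<le> e \<Longrightarrow> par e f \<Longrightarrow> u \<in> T \<Longrightarrow> \<pi> (hom e f) u \<in> T"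
    and hC: "\<And>c u. u \<in> T \<Longrightarrow> \<pi> (cen c) u \<in> T"
  shows "negw ws \<Longrightarrow> t \<in> T \<Longrightarrow>
    (\<forall>e f. 0 \<le> e \<longrightarrow> par e f \<longrightarrow> \<pi> (hom e f) (wact ws t) \<in> SW T) \<and> (\<forall>c. \<pi> (cen c) (wact ws t) \<in> SW T)"
proof (induction ws)
  case Nil
  then show ?case using hT hC SW_base by simp
next
  case (Cons x ws)
  obtain d f where x: "x = (d, f)" by (cases x)
  have d: "d < 0" "par d f" and nw: "negw ws" using Cons.prems by (auto simp: x)
  have IH: "\<forall>e f. 0 \<le> e \<longrightarrow> par e f \<longrightarrow> \<pi> (hom e f) (wact ws t) \<in> SW T"
           "\<forall>c. \<pi> (cen c) (wact ws t) \<in> SW T"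
    using Cons.IH nw Cons.prems(2) by auto
  define w where "w = wact ws t"
  have hw: "wact (x # ws) t = \<pi> (hom d f) w" by (simp add: x w_def)
  show ?case
  proof (intro conjI allI impI)
    fix e u assume e: "0 \<le> e" "par e u"
    have eq: "\<pi> (hom e u) (\<pi> (hom d f) w) = \<pi> (hom (e + d) (brp e u d f)) w
       + \<pi> (cen (if e + d = 0 then psi_mono e u f else 0)) w + \<pi> (hom d f) (\<pi> (hom e u) w)"
      by (rule pi_comm_hom[OF e(2) d(2)])
    have t1: "\<pi> (hom (e + d) (brp e u d f)) w \<in> SW T"
    proof (cases "0 \<le> e + d")
      case True
      then show ?thesis using IH(1) par_brp[OF e(2) d(2)] by (simp add: w_def)
    next
      case False
      have "negw ((e + d, brp e u d f) # ws)" using False par_brp[OF e(2) d(2)] nw by simp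
      from SW_gen[OF this Cons.prems(2)] show ?thesis by (simp add: w_def)
    qed
    have t2: "\<pi> (cen (if e + d = 0 then psi_mono e u f else 0)) w \<in> SW T"
      using IH(2) by (simp add: w_def)
    have t3: "\<pi> (hom d f) (\<pi> (hom e u) w) \<in> SW T"
      using SW_neg[OF d] IH(1) e by (simp add: w_def)
    show "\<pi> (hom e u) (wact (x # ws) t) \<in> SW T"
      unfolding hw eq SW_def by (intro span_add) (use t1 t2 t3 in \<open>simp_all add: SW_def\<close>)
  next
    fix c
    have "\<pi> (cen c) (\<pi> (hom d f) w) = \<pi> (hom d f) (\<pi> (cen c) w)"
      by (rule pi_cen_comm[OF hom_in[OF d(2)]])
    then show "\<pi> (cen c) (wact (x # ws) t) \<in> SW T"
      using SW_neg[OF d] IH(2) by (simp add: hw w_def)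
  qed
qed

lemma SW_letters:
  assumes hT: "\<And>e f u. 0 \<le> e \<Longrightarrow> par e f \<Longrightarrow> u \<in> T \<Longrightarrow> \<pi> (hom e f) u \<in> T"
    and hC: "\<And>c u. u \<in> T \<Longrightarrow> \<pi> (cen c) u \<in> T"
  shows "par k f \<Longrightarrow> u \<in> SW T \<Longrightarrow> \<pi> (hom k f) u \<in> SW T"
    and "u \<in> SW T \<Longrightarrow> \<pi> (cen c) u \<in> SW T"
proof -
  assume k: "par k f" and u: "u \<in> SW T"
  show "\<pi> (hom k f) u \<in> SW T"
  proof (cases "k < 0")
    case True
    then show ?thesis using SW_neg k u by blast
  next
    case False
    show ?thesis unfolding SW_def
    proof (rule pi_span[OF hom_in[OF k] _ u[unfolded SW_def]])
      fix g assume "g \<in> {wact ws t | ws t. negw ws \<and> t \<in> T}"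
      then obtain ws t where "g = wact ws t" "negw ws" "t \<in> T" by blast
      then show "\<pi> (hom k f) g \<in> span {wact ws t | ws t. negw ws \<and> t \<in> T}"
        using SW_nonneg_gen[OF hT hC, of ws t] False k by (simp add: SW_def)
    qed
  qed
next
  assume u: "u \<in> SW T"
  show "\<pi> (cen c) u \<in> SW T" unfolding SW_def
  proof (rule pi_span[OF cen_in _ u[unfolded SW_def]])
    fix g assume "g \<in> {wact ws t | ws t. negw ws \<and> t \<in> T}"
    then obtain ws t where "g = wact ws t" "negw ws" "t \<in> T" by blast
    then show "\<pi> (cen c) g \<in> span {wact ws t | ws t. negw ws \<and> t \<in> T}"
      using SW_nonneg_gen[OF hT hC, of ws t] by (simp add: SW_def)
  qed
qed

lemma decomp:
  assumes "finite S"
  shows "a \<in> Dplus \<Longrightarrow> supp a \<subseteq> S \<Longrightarrow> \<pi> (a, c) u = (\<Sum>k\<in>S. \<pi> (hom k (a k)) u) + \<pi> (cen c) u"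
  using assms
proof (induction S arbitrary: a rule: finite_induct)
  case empty
  then have "a = (\<lambda>k. 0)" by (auto simp: supp_def fun_eq_iff)
  then show ?case by (simp add: cen_def)
next
  case (insert k S)
  define a' where "a' = a(k := 0)"
  have aD: "finite (supp a)" "\<forall>j. pcompose (a j) [:- of_int j - 1, -1:] = - a j"
    using insert.prems(1) by (auto simp: Dplus_def)
  have "supp a' \<subseteq> supp a" by (auto simp: supp_def a'_def)
  then have a'D: "a' \<in> Dplus"
    using aD finite_subset unfolding Dplus_def by (auto simp: a'_def)
  have sa': "supp a' \<subseteq> S" using insert.prems(2) by (auto simp: supp_def a'_def)
  have pk: "par k (a k)" using aD by (simp add: par_def)
  have eq: "(a, c) = addHat (hom k (a k)) (a', c)"
    by (auto simp: addHat_def hom_def homf_def a'_def fun_eq_iff)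
  have "\<pi> (a, c) u = \<pi> (hom k (a k)) u + \<pi> (a', c) u"
    unfolding eq by (rule pi_addHat[OF hom_in[OF pk]]) (simp add: DhatPlus_def a'D)
  also have "\<pi> (a', c) u = (\<Sum>j\<in>S. \<pi> (hom j (a' j)) u) + \<pi> (cen c) u"
    by (rule insert.IH[OF a'D sa'])
  also have "(\<Sum>j\<in>S. \<pi> (hom j (a' j)) u) = (\<Sum>j\<in>S. \<pi> (hom j (a j)) u)"
    using insert.hyps(2) by (intro sum.cong) (auto simp: a'_def)
  finally show ?case using insert.hyps by (simp add: add.assoc)
qed

lemma letters_suffice:
  assumes W: "subspace W"
    and hk: "\<And>k f u. par k f \<Longrightarrow> u \<in> W \<Longrightarrow> \<pi> (hom k f) u \<in> W"
    and hc: "\<And>c u. u \<in> W \<Longrightarrow> \<pi> (cen c) u \<in> W"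
    and x: "x \<in> DhatPlus" and u: "u \<in> W"
  shows "\<pi> x u \<in> W"
proof -
  obtain a c where xac: "x = (a, c)" by (cases x)
  have a: "a \<in> Dplus" using x by (simp add: xac DhatPlus_def)
  then have fa: "finite (supp a)" by (simp add: Dplus_def)
  have pk: "par k (a k)" for k using a by (simp add: Dplus_def par_def)
  have "\<pi> x u = (\<Sum>k\<in>supp a. \<pi> (hom k (a k)) u) + \<pi> (cen c) u"
    unfolding xac by (rule decomp[OF fa a subset_refl])
  also have "\<dots> \<in> W"
    using W hk hc u pk by (intro subspace_add subspace_sum) auto
  finally show ?thesis .
qed

lemma SW_inv:
  assumes T: "subspace T"
    and hT: "\<And>e f u. 0 \<le> e \<Longrightarrow> par e f \<Longrightarrow> u \<in> T \<Longrightarrow> \<pi> (hom e f) u \<in> T"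
    and hC: "\<And>c u. u \<in> T \<Longrightarrow> \<pi> (cen c) u \<in> T"
  shows "invariant_subspace sc \<pi> (SW T)"
  unfolding invariant_subspace_def
proof (intro conjI ballI subsetI)
  show "subspace (SW T)" by (simp add: SW_def)
next
  fix x y assume x: "x \<in> DhatPlus" and "y \<in> \<pi> x ` SW T"
  then obtain u where u: "u \<in> SW T" "y = \<pi> x u" by blast
  show "y \<in> SW T" unfolding u(2)
    by (rule letters_suffice[OF _ SW_letters(1)[OF hT hC] SW_letters(2)[OF hT hC] x u(1)])
       (simp_all add: SW_def)
qed

definition Nop :: "int \<Rightarrow> 'v \<Rightarrow> 'v" where
  "Nop k u = \<pi> halfD_el u - sc (lam0 + of_int k) u"

fun opl :: "int list \<Rightarrow> 'v \<Rightarrow> 'v" where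
  "opl [] u = u"
| "opl (k # ks) u = Nop k (opl ks u)"

lemma Nop_add: "Nop k (u + w) = Nop k u + Nop k w"
  by (simp add: Nop_def pi_add halfD_in scale_right_distrib)

lemma Nop_sc: "Nop k (sc c u) = sc c (Nop k u)"
  by (simp add: Nop_def pi_sc halfD_in scale_right_diff_distrib mult.commute)

lemma Nop_zero: "Nop k 0 = 0"
  by (simp add: Nop_def pi_zero halfD_in)

lemma Nop_comm: "Nop a (Nop b u) = Nop b (Nop a u)"
  by (simp add: Nop_def pi_diff pi_sc halfD_in scale_right_diff_distrib mult.commute)

lemma opl_add: "opl ks (u + w) = opl ks u + opl ks w"
  by (induction ks) (simp_all add: Nop_add)

lemma opl_sc: "opl ks (sc c u) = sc c (opl ks u)"
  by (induction ks) (simp_all add: Nop_sc)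

lemma opl_zero: "opl ks 0 = 0"
  by (induction ks) (simp_all add: Nop_zero)

lemma opl_Nop: "opl ks (Nop k u) = Nop k (opl ks u)"
  by (induction ks) (simp_all add: Nop_comm)

lemma opl_comm: "opl ks (opl ls u) = opl ls (opl ks u)"
  by (induction ls) (simp_all add: opl_Nop)

lemma opl_append: "opl (ks @ ls) u = opl ks (opl ls u)"
  by (induction ks) simp_all

lemma opl_E: "u \<in> E j \<Longrightarrow> opl ks u = sc (\<Prod>k\<leftarrow>ks. of_int j - of_int k) u"
proof (induction ks)
  case Nil
  then show ?case by simp
next
  case (Cons k ks)
  have "Nop k u = sc (of_int j - of_int k) u"
    using Cons.prems by (simp add: Nop_def E_iff scale_left_diff_distrib[symmetric])
  then show ?case using Cons by (simp add: Nop_sc mult.commute)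
qed

lemma EI_span:
  assumes "u \<in> span (\<Union>k\<in>K. E k)"
  shows "\<exists>ks. set ks \<subseteq> K \<and> opl ks u = 0"
proof -
  have "subspace {u. \<exists>ks. set ks \<subseteq> K \<and> opl ks u = 0}"
    unfolding subspace_def
  proof (intro conjI ballI allI)
    show "0 \<in> {u. \<exists>ks. set ks \<subseteq> K \<and> opl ks u = 0}"
      by (auto intro!: exI[of _ "[]"])
  next
    fix x y assume "x \<in> {u. \<exists>ks. set ks \<subseteq> K \<and> opl ks u = 0}" "y \<in> {u. \<exists>ks. set ks \<subseteq> K \<and> opl ks u = 0}"
    then obtain ks ls where "set ks \<subseteq> K" "opl ks x = 0" "set ls \<subseteq> K" "opl ls y = 0" by blast
    then show "x + y \<in> {u. \<exists>ks. set ks \<subseteq> K \<and> opl ks u = 0}"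
      by (auto intro!: exI[of _ "ks @ ls"] simp: opl_append opl_add opl_zero)
        (metis opl_comm opl_zero)
  next
    fix c x assume "x \<in> {u. \<exists>ks. set ks \<subseteq> K \<and> opl ks u = 0}"
    then show "sc c x \<in> {u. \<exists>ks. set ks \<subseteq> K \<and> opl ks u = 0}"
      by (auto simp: opl_sc)
  qed
  moreover have "x \<in> {u. \<exists>ks. set ks \<subseteq> K \<and> opl ks u = 0}" if "x \<in> (\<Union>k\<in>K. E k)" for x
  proof -
    from that obtain k where "k \<in> K" "x \<in> E k" by blast
    then show ?thesis by (auto intro!: exI[of _ "[k]"] simp: Nop_def E_iff)
  qed
  ultimately show ?thesis using span_subspace_induct[OF assms] by blast
qed

lemma EI:
  assumes u: "u \<in> E j" "u \<in> span (\<Union>k\<in>K. E k)" and j: "j \<notin> K"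
  shows "u = 0"
proof -
  obtain ks where ks: "set ks \<subseteq> K" "opl ks u = 0" using EI_span[OF u(2)] by blast
  have "(\<Prod>k\<leftarrow>ks. of_int j - of_int k) \<noteq> (0::complex)"
    using ks(1) j by (auto simp: prod_list_zero_iff)
  then show ?thesis using ks(2) opl_E[OF u(1), of ks] by simp
qed

lemma SVL:
  assumes T: "subspace T" and TE: "T \<subseteq> E (- d)" and d: "0 < d"
    and hp: "\<And>e f t. 0 < e \<Longrightarrow> par e f \<Longrightarrow> t \<in> T \<Longrightarrow> \<pi> (hom e f) t = 0"
    and h0: "\<And>f t. par 0 f \<Longrightarrow> t \<in> T \<Longrightarrow> \<pi> (hom 0 f) t \<in> T"
    and hc: "\<And>c t. t \<in> T \<Longrightarrow> \<pi> (cen c) t \<in> T"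
    and t: "t \<in> T"
  shows "t = 0"
proof -
  have hT: "\<pi> (hom e f) u \<in> T" if "0 \<le> e" "par e f" "u \<in> T" for e f u
  proof (cases "e = 0")
    case True
    then show ?thesis using h0 that by simp
  next
    case False
    then show ?thesis using hp[of e f u] that subspace_0[OF T] by simp
  qed
  have inv: "invariant_subspace sc \<pi> (SW T)" by (rule SW_inv[OF T hT hc])
  have sub: "SW T \<subseteq> span (\<Union>k\<in>{k. k < 0}. E k)"
    unfolding SW_def
  proof (rule span_mono, clarify)
    fix ws t' assume ws: "negw ws" and t': "t' \<in> T"
    have "wact ws t' \<in> E (- d + wdeg ws)"
      using wact_E[OF negw_parw[OF ws]] t' TE by blast
    moreover have "- d + wdeg ws < 0" using negw_deg[OF ws] d by simp
    ultimately show "wact ws t' \<in> (\<Union>k\<in>{k. k < 0}. E k)" by blast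
  qed
  have "v \<notin> SW T"
  proof
    assume "v \<in> SW T"
    then have "v = 0" using EI[OF v_E0] sub by blast
    then show False using v_nz by simp
  qed
  then have "SW T = {0}" using irr inv by (auto simp: irreducible_rep_def)
  then show ?thesis using SW_base[OF t] by simp
qed

definition NW :: "int \<Rightarrow> 'v set" where
  "NW j = {wact ws v | ws. negw ws \<and> wdeg ws = j}"

lemma span_all: "u \<in> span (\<Union>j. NW j)"
proof -
  define T where "T = span {v}"
  have T: "subspace T" by (simp add: T_def)
  have hT: "\<pi> (hom e f) u \<in> T" if "0 \<le> e" "par e f" "u \<in> T" for e f u
    unfolding T_def
  proof (rule pi_span[OF hom_in[OF that(2)] _ that(3)[unfolded T_def]])
    fix g assume "g \<in> {v}"
    then show "\<pi> (hom e f) g \<in> span {v}"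
    proof (cases "e = 0")
      case True
      then show ?thesis using \<open>g \<in> {v}\<close> v_zero that(2) by (simp add: span_scale span_base)
    next
      case False
      then show ?thesis using \<open>g \<in> {v}\<close> v_pos that by (simp add: span_zero)
    qed
  qed
  have hC: "\<pi> (cen c) u \<in> T" if "u \<in> T" for c u
    unfolding T_def
  proof (rule pi_span[OF cen_in _ that[unfolded T_def]])
    fix g assume "g \<in> {v}"
    then show "\<pi> (cen c) g \<in> span {v}" using v_cen by (simp add: span_scale span_base)
  qed
  have "SW T = UNIV"
  proof (rule v_gen[OF SW_inv[OF T hT hC] SW_base])
    show "v \<in> T" unfolding T_def by (rule span_base) simp
  qed
  moreover have "SW T \<subseteq> span (\<Union>j. NW j)"
    unfolding SW_def
  proof (rule span_minimal, clarify)
    fix ws t assume ws: "negw ws" and t: "t \<in> T"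
    then obtain c where "t = sc c v" by (auto simp: T_def span_singleton)
    then have "wact ws t = sc c (wact ws v)" by (simp add: wact_sc negw_parw[OF ws])
    moreover have "wact ws v \<in> (\<Union>j. NW j)" using ws by (auto simp: NW_def)
    ultimately show "wact ws t \<in> span (\<Union>j. NW j)" by (simp add: span_scale span_base)
  qed simp
  ultimately show ?thesis by blast
qed

lemma NW_E: "NW j \<subseteq> E j"
proof
  fix x assume "x \<in> NW j"
  then obtain ws where ws: "x = wact ws v" "negw ws" "wdeg ws = j" by (auto simp: NW_def)
  show "x \<in> E j" using wact_E[OF negw_parw[OF ws(2)] v_E0] ws by simp
qed

lemma E_span_NW: "u \<in> E j \<Longrightarrow> u \<in> span (NW j)"
proof -
  assume u: "u \<in> E j"
  have "(\<Union>j. NW j) = NW j \<union> (\<Union>k\<in>{k. k \<noteq> j}. NW k)" by auto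
  then have "u \<in> span (NW j \<union> (\<Union>k\<in>{k. k \<noteq> j}. NW k))" using span_all by simp
  then obtain a b where ab: "u = a + b" "a \<in> span (NW j)" "b \<in> span (\<Union>k\<in>{k. k \<noteq> j}. NW k)"
    unfolding span_Un by blast
  have aE: "a \<in> E j" using ab(2) span_minimal[OF NW_E E_subspace] by blast
  have "b \<in> span (\<Union>k\<in>{k. k \<noteq> j}. E k)"
    using ab(3) span_mono[of "\<Union>k\<in>{k. k \<noteq> j}. NW k" "\<Union>k\<in>{k. k \<noteq> j}. E k"] NW_E by blast
  moreover have "b \<in> E j"
    using subspace_diff[OF E_subspace u aE] ab(1) by (simp add: algebra_simps)
  ultimately have "b = 0" using EI by blast
  then show ?thesis using ab by simp
qed

end




definition lamc :: "(dhat \<Rightarrow> complex) \<Rightarrow> nat \<Rightarrow> complex" where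
  "lamc L n = (if odd n then L (hom 0 (halfD ^ n)) else 0)"

definition ell :: "(dhat \<Rightarrow> complex) \<Rightarrow> complex poly \<Rightarrow> complex" where
  "ell L P = (\<Sum>n\<le>degree P. coeff (pcompose P [:-1/2, 1:]) n * lamc L n)"

definition Dl :: "(dhat \<Rightarrow> complex) \<Rightarrow> complex fps" where
  "Dl L = Abs_fps (\<lambda>n. lamc L n / fact n)"

lemma DeltaFps_Dl: "DeltaFps L = - Dl L"
  by (rule fps_ext) (simp add: DeltaFps_def Dl_def DeltaN_def lamc_def mono0_hom)

lemma degree_pc_half: "degree (pcompose P [:a, 1 :: complex:]) = degree P"
  by (simp add: degree_pcompose)

lemma ell_bound:
  assumes "degree P \<le> N"
  shows "ell L P = (\<Sum>n\<le>N. coeff (pcompose P [:-1/2, 1:]) n * lamc L n)"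
  unfolding ell_def using assms
  by (intro sum.mono_neutral_left) (auto simp: coeff_eq_0 degree_pc_half)

lemma ell_add: "ell L (P + Q) = ell L P + ell L Q"
proof -
  define N where "N = max (degree P) (degree Q)"
  have "degree (P + Q) \<le> N" "degree P \<le> N" "degree Q \<le> N"
    by (auto simp: N_def degree_add_le)
  then show ?thesis
    by (simp add: ell_bound[of _ N] pcompose_add sum.distrib distrib_right)
qed

lemma ell_smult: "ell L (smult c P) = c * ell L P"
proof -
  have "degree (smult c P) \<le> degree P" by simp
  then show ?thesis
    by (simp add: ell_bound[of _ "degree P"] ell_def pcompose_smult sum_distrib_left mult.assoc)
qed

lemma ell_0[simp]: "ell L 0 = 0"
  by (simp add: ell_def)

lemma ell_uminus: "ell L (- P) = - ell L P"
  using ell_smult[of L "-1" P] by simp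

lemma ell_diff: "ell L (P - Q) = ell L P - ell L Q"
  using ell_add[of L P "- Q"] by (simp add: ell_uminus)

lemma ell_sum: "ell L (sum F A) = (\<Sum>i\<in>A. ell L (F i))"
  by (induction A rule: infinite_finite_induct) (simp_all add: ell_add)

lemma ell_refl: "ell L (pcompose P [:-1, -1:]) = - ell L P"
proof -
  have e: "pcompose (pcompose P [:-1, -1:]) [:-1/2, 1:] = pcompose (pcompose P [:-1/2, 1:]) [:0, -1 :: complex:]"
    by (simp add: pcompose_assoc[symmetric] comp_lin)
  have d: "degree (pcompose P [:-1, -1 :: complex:]) = degree P"
    by (simp add: degree_pcompose)
  have "ell L (pcompose P [:-1, -1:]) = (\<Sum>n\<le>degree P. (-1)^n * coeff (pcompose P [:-1/2, 1:]) n * lamc L n)"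
    unfolding ell_def d e by (simp add: coeff_pcompose_linear)
  also have "\<dots> = (\<Sum>n\<le>degree P. - (coeff (pcompose P [:-1/2, 1:]) n * lamc L n))"
    by (intro sum.cong) (auto simp: lamc_def)
  finally show ?thesis by (simp add: ell_def sum_negf)
qed

lemma pcompose_power': "pcompose (p ^ n) q = (pcompose p q) ^ n"
  by (induction n) (simp_all add: pcompose_mult)

lemma pcompose_monom1: "pcompose (monom 1 n) (q :: complex poly) = q ^ n"
proof -
  have "monom (1::complex) n = [:0, 1:] ^ n" by (simp add: monom_altdef)
  moreover have "pcompose [:0, 1:] q = q" by (simp add: pcompose_pCons)
  ultimately show ?thesis by (simp add: pcompose_power')
qed

lemma pcompose_as_sum: "pcompose (Q :: complex poly) r = (\<Sum>n\<le>degree Q. smult (coeff Q n) (r ^ n))"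
proof -
  have "pcompose Q r = pcompose (\<Sum>n\<le>degree Q. smult (coeff Q n) (monom 1 n)) r"
    by (simp add: smult_monom poly_as_sum_of_monoms)
  also have "\<dots> = (\<Sum>n\<le>degree Q. smult (coeff Q n) (r ^ n))"
    by (simp add: pcompose_sum pcompose_smult pcompose_monom1)
  finally show ?thesis .
qed

lemma par_halfD_pow: "odd n \<Longrightarrow> par 0 (halfD ^ n)"
proof -
  assume n: "odd n"
  have "pcompose halfD [:-1, -1:] = - halfD" by (simp add: halfD_def pcompose_pCons)
  then show ?thesis using n by (simp add: par_def pcompose_power')
qed

lemma monom_refl: "pcompose (monom 1 n) [:0, -1:] = smult ((-1)^n) (monom (1::complex) n)"
  by (rule poly_eqI) (simp add: coeff_pcompose_linear coeff_monom)

lemma oddp_iff: "oddp g \<longleftrightarrow> pcompose g [:0, -1:] = - g"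
proof
  assume "oddp g"
  then show "pcompose g [:0, -1:] = - g"
  proof (intro poly_eqI)
    fix n
    show "coeff (pcompose g [:0, -1:]) n = coeff (- g) n"
      using \<open>oddp g\<close> by (cases "even n") (auto simp: coeff_pcompose_linear oddp_def)
  qed
next
  assume "pcompose g [:0, -1:] = - g"
  then show "oddp g" by (rule oddp_I)
qed

lemma par_m1: "par (-1) g \<longleftrightarrow> pcompose g [:0, -1:] = - g"
  by (simp add: par_def)

lemma ell_monom: "ell L (monom 1 m) = fact m * (Dl L * fps_exp (-1/2)) $ m"
proof -
  have "ell L (monom 1 m) = (\<Sum>n\<le>m. coeff ([:-1/2, 1:] ^ m) n * lamc L n)"
    by (simp add: ell_def pcompose_monom1 degree_monom_eq)
  also have "\<dots> = (\<Sum>n\<le>m. fact m * (lamc L n / fact n * ((-1/2) ^ (m - n) / fact (m - n))))"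
  proof (intro sum.cong refl)
    fix n assume "n \<in> {..m}"
    then have n: "n \<le> m" by simp
    have "coeff ([:-1/2, 1:] ^ m) n = of_nat (m choose n) * (-1/2 :: complex) ^ (m - n)"
      using coeff_linear_poly_power[OF n, of "-1/2 :: complex" 1] by simp
    also have "of_nat (m choose n) = (fact m / (fact n * fact (m - n)) :: complex)"
      by (rule binomial_fact[OF n])
    finally show "coeff ([:-1/2, 1:] ^ m) n * lamc L n = fact m * (lamc L n / fact n * ((-1/2) ^ (m - n) / fact (m - n)))"
      by (simp add: field_simps)
  qed
  also have "\<dots> = fact m * (Dl L * fps_exp (-1/2)) $ m"
    by (simp add: fps_mult_nth Dl_def sum_distrib_left atLeast0AtMost)
  finally show ?thesis .
qed

lemma ell_gX: "ell L (g * monom 1 n) = fact n * pdiff g (Dl L * fps_exp (-1/2)) $ n"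
proof -
  have "g * monom 1 n = (\<Sum>i\<le>degree g. smult (coeff g i) (monom 1 (n + i)))"
  proof -
    have "g * monom 1 n = (\<Sum>i\<le>degree g. monom (coeff g i) i) * monom 1 n"
      by (simp add: poly_as_sum_of_monoms)
    also have "\<dots> = (\<Sum>i\<le>degree g. smult (coeff g i) (monom 1 (n + i)))"
      by (simp add: sum_distrib_right mult_monom smult_monom add.commute)
    finally show ?thesis .
  qed
  then have "ell L (g * monom 1 n) = (\<Sum>i\<le>degree g. coeff g i * (fact (n + i) * (Dl L * fps_exp (-1/2)) $ (n + i)))"
    by (simp add: ell_sum ell_smult ell_monom)
  also have "\<dots> = fact n * pdiff g (Dl L * fps_exp (-1/2)) $ n"
    by (simp add: pdiff_nth)
  finally show ?thesis .
qed

lemma telescope: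
  assumes c: "\<And>q. ell L (g * q - sh (g * q) 1) = 0"
    and dv: "\<And>s. s < d \<Longrightarrow> g dvd sh \<phi> (int s)"
  shows "ell L (\<phi> - sh \<phi> (int d)) = 0"
  using dv
proof (induction d)
  case 0
  then show ?case by simp
next
  case (Suc d)
  have 1: "ell L (\<phi> - sh \<phi> (int d)) = 0" using Suc by simp
  obtain q where q: "sh \<phi> (int d) = g * q" using Suc.prems[of d] by (auto elim!: dvdE)
  have X: "sh (sh \<phi> (int d)) 1 = sh \<phi> (int (Suc d))" by (simp add: sh_sh add.commute)
  have "(\<phi> - sh \<phi> (int d)) + (sh \<phi> (int d) - sh (sh \<phi> (int d)) 1) = \<phi> - sh \<phi> (int (Suc d))"
    by (simp only: X) simp
  then have "\<phi> - sh \<phi> (int (Suc d)) = (\<phi> - sh \<phi> (int d)) + (g * q - sh (g * q) 1)"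
    by (simp only: q)
  then show ?case using 1 c[of q] by (simp only: ell_add) simp
qed

lemma cond_reverse:
  assumes g: "pcompose g [:0, -1:] = - g"
    and c: "\<And>n. odd n \<Longrightarrow> ell L (g * monom 1 n) = 0"
  shows "ell L (g * q - sh (g * q) 1) = 0"
proof -
  have tm: "ell L (g * monom 1 n - sh (g * monom 1 n) 1) = 0" for n
  proof -
    define k where "k = g * monom 1 n"
    have kr: "pcompose k [:0, -1:] = smult (- ((-1) ^ n)) k"
      by (simp add: k_def pcompose_mult g monom_refl pcompose_uminus pcompose_smult)
    have "pcompose k [:-1, -1:] = pcompose (pcompose k [:0, -1:]) [:1, 1:]"
      by (simp add: pcompose_assoc[symmetric] comp_lin)
    also have "\<dots> = smult (- ((-1) ^ n)) (sh k 1)"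
      by (simp add: kr sh_def pcompose_smult pcompose_uminus)
    finally have "smult (- ((-1) ^ n)) (pcompose k [:-1, -1:]) = smult ((- ((-1) ^ n)) * (- ((-1) ^ n))) (sh k 1)"
      by simp
    also have "(- ((-1) ^ n)) * (- ((-1) ^ n)) = (1::complex)"
      by (simp flip: power_add)
    finally have shk: "sh k 1 = smult (- ((-1) ^ n)) (pcompose k [:-1, -1:])" by simp
    have "ell L (sh k 1) = (- ((-1) ^ n)) * ell L (pcompose k [:-1, -1:])"
      by (simp only: shk ell_smult)
    then have "ell L (sh k 1) = (-1) ^ n * ell L k"
      by (simp add: ell_refl)
    then have "ell L (k - sh k 1) = ell L k - (-1) ^ n * ell L k"
      by (simp only: ell_diff)
    also have "\<dots> = 0"
    proof (cases "even n")
      case True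
      then show ?thesis by simp
    next
      case False
      then show ?thesis using c[of n] by (simp add: k_def)
    qed
    finally show ?thesis by (simp add: k_def)
  qed
  have "g * q = (\<Sum>n\<le>degree q. smult (coeff q n) (g * monom 1 n))"
  proof -
    have "g * q = g * (\<Sum>n\<le>degree q. smult (coeff q n) (monom 1 n))"
      by (simp add: smult_monom poly_as_sum_of_monoms)
    then show ?thesis by (simp add: sum_distrib_left mult_smult_right)
  qed
  then have "g * q - sh (g * q) 1 = (\<Sum>n\<le>degree q. smult (coeff q n) (g * monom 1 n - sh (g * monom 1 n) 1))"
    by (simp add: sh_sum sh_smult smult_diff_right sum_subtractf)
  then show ?thesis by (simp add: ell_sum ell_smult tm)
qed

context qfrep
begin

lemma Lam_add: "par 0 a \<Longrightarrow> par 0 b \<Longrightarrow> \<Lambda> (hom 0 (a + b)) = \<Lambda> (hom 0 a) + \<Lambda> (hom 0 b)"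
  using lin hom_zero_in by (simp add: linear_on_zero_def addHat_hom[symmetric])

lemma Lam_smult: "par 0 a \<Longrightarrow> \<Lambda> (hom 0 (smult c a)) = c * \<Lambda> (hom 0 a)"
  using lin hom_zero_in by (simp add: linear_on_zero_def scaleHat_hom[symmetric])

lemma Lam_zero: "\<Lambda> (hom 0 0) = 0"
  using Lam_smult[of 0 0] by simp

lemma Lam_sum: "(\<And>n. n \<in> S \<Longrightarrow> par 0 (F n)) \<Longrightarrow> \<Lambda> (hom 0 (sum F S)) = (\<Sum>n\<in>S. \<Lambda> (hom 0 (F n)))"
proof (induction S rule: infinite_finite_induct)
  case (infinite A)
  then show ?case by (simp add: Lam_zero)
next
  case empty
  then show ?case by (simp add: Lam_zero)
next
  case (insert x F)
  then show ?case by (simp add: Lam_add par_sum)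
qed

lemma L1:
  assumes P: "par 0 P"
  shows "\<Lambda> (hom 0 P) = ell \<Lambda> P"
proof -
  define Q where "Q = pcompose P [:-1/2, 1:]"
  have PQ: "P = pcompose Q halfD"
    by (simp add: Q_def halfD_def pcompose_assoc[symmetric] comp_lin)
  have "pcompose Q [:0, -1:] = pcompose P [:-1/2, -1:]"
    by (simp add: Q_def pcompose_assoc[symmetric] comp_lin)
  also have "\<dots> = pcompose (pcompose P [:-1, -1:]) [:-1/2, 1:]"
    by (simp add: pcompose_assoc[symmetric] comp_lin)
  also have "\<dots> = - Q" using P by (simp add: par_def Q_def pcompose_uminus)
  finally have "oddp Q" by (simp add: oddp_iff)
  then have ev: "even n \<Longrightarrow> coeff Q n = 0" for n by (simp add: oddp_def)
  have pt: "par 0 (smult (coeff Q n) (halfD ^ n))" for n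
    by (cases "even n") (simp_all add: ev par_smult par_halfD_pow)
  have "\<Lambda> (hom 0 P) = (\<Sum>n\<le>degree Q. \<Lambda> (hom 0 (smult (coeff Q n) (halfD ^ n))))"
    by (subst PQ, subst pcompose_as_sum) (rule Lam_sum[OF pt])
  also have "\<dots> = (\<Sum>n\<le>degree Q. coeff Q n * lamc \<Lambda> n)"
  proof (intro sum.cong refl)
    fix n
    show "\<Lambda> (hom 0 (smult (coeff Q n) (halfD ^ n))) = coeff Q n * lamc \<Lambda> n"
      by (cases "even n") (simp_all add: ev Lam_zero Lam_smult par_halfD_pow lamc_def)
  qed
  also have "\<dots> = ell \<Lambda> P" by (simp add: ell_def Q_def degree_pc_half)
  finally show ?thesis .
qed

lemma poly_odd_0: "pcompose g [:0, -1:] = - g \<Longrightarrow> poly (g :: complex poly) 0 = 0"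
proof -
  assume g: "pcompose g [:0, -1:] = - g"
  have "coeff (pcompose g [:0, -1:]) 0 = coeff (- g) 0" by (simp add: g)
  then have "coeff g 0 = - coeff g 0" using coeff_pcompose_linear[of g "-1" 0] by simp
  then have "coeff g 0 = 0" by simp
  then show ?thesis by (simp add: poly_0_coeff_0)
qed

lemma cond_forward:
  assumes g: "par (-1) g" and gv: "\<pi> (hom (-1) g) v = 0" and n: "odd n"
  shows "ell \<Lambda> (g * monom 1 n) = 0"
proof -
  define u where "u = (monom 1 n :: complex poly)"
  have uo: "pcompose u [:0, -1:] = - u" using n by (simp add: u_def monom_refl)
  have go: "pcompose g [:0, -1:] = - g" using g by (simp add: par_m1)
  have p1: "par 1 (sh u 1)"
  proof -
    have "pcompose (sh u 1) [:- of_int 1 - 1, -1:] = pcompose (pcompose u [:0, -1:]) [:1, 1:]"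
      by (simp add: sh_def pcompose_assoc[symmetric] comp_lin)
    then show ?thesis by (simp add: par_def uo sh_def pcompose_uminus)
  qed
  have eq: "\<pi> (hom 1 (sh u 1)) (\<pi> (hom (-1) g) v) = \<pi> (hom (1 + -1) (brp 1 (sh u 1) (-1) g)) v
     + \<pi> (cen (if 1 + -1 = (0::int) then psi_mono 1 (sh u 1) g else 0)) v + \<pi> (hom (-1) g) (\<pi> (hom 1 (sh u 1)) v)"
    by (rule pi_comm_hom[OF p1 g])
  have psi0: "psi_mono 1 (sh u 1) g = 0"
    using poly_odd_0[OF go] by (simp add: psi_mono_def)
  define P where "P = brp 1 (sh u 1) (-1) g"
  have PP: "par 0 P" using par_brp[OF p1 g] by (simp add: P_def)
  have "\<pi> (hom 0 P) v = 0"
    using eq by (simp add: gv psi0 pi_cen0 v_pos[OF _ p1] pi_zero hom_in[OF g] hom_in[OF p1] P_def)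
  then have "\<Lambda> (hom 0 P) = 0" using v_zero[OF PP] v_nz by simp
  then have e0: "ell \<Lambda> P = 0" using L1[OF PP] by simp
  define k where "k = u * g"
  have Pk: "P = k - sh k 1"
    by (simp add: P_def brp_def k_def sh_sh sh_mult)
  have ke: "pcompose k [:0, -1:] = k" by (simp add: k_def pcompose_mult uo go)
  have "sh k 1 = pcompose (pcompose k [:0, -1:]) [:1, 1:]" by (simp add: ke sh_def)
  also have "\<dots> = pcompose k [:-1, -1:]" by (simp add: pcompose_assoc[symmetric] comp_lin)
  finally have "ell \<Lambda> (sh k 1) = - ell \<Lambda> k" by (simp add: ell_refl)
  then have "ell \<Lambda> k = 0" using e0 by (simp add: Pk ell_diff)
  then show ?thesis by (simp add: k_def u_def mult.commute)
qed

end




definition bd :: "complex poly \<Rightarrow> nat \<Rightarrow> complex poly" where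
  "bd g d = (\<Prod>i<d. sh g (- int i))"

definition Qs :: "complex poly \<Rightarrow> nat \<Rightarrow> complex poly set" where
  "Qs g d = {f. par (- int d) f \<and> bd g d dvd f}"

definition tau :: "nat \<Rightarrow> complex poly \<Rightarrow> complex poly" where
  "tau d f = pcompose f [:of_int (int d) - 1, -1:]"

lemma par_tau: "par (- int d) f \<longleftrightarrow> tau d f = - f"
  by (simp add: par_def tau_def)

lemma tau_tau: "tau d (tau d f) = f"
  by (simp add: tau_def pcompose_assoc[symmetric] comp_lin)

lemma tau_add: "tau d (f + g) = tau d f + tau d g"
  by (simp add: tau_def pcompose_add)
lemma tau_diff: "tau d (f - g) = tau d f - tau d g"
  by (simp add: tau_def pcompose_diff)
lemma tau_smult: "tau d (smult c f) = smult c (tau d f)"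
  by (simp add: tau_def pcompose_smult)
lemma tau_mult: "tau d (f * g) = tau d f * tau d g"
  by (simp add: tau_def pcompose_mult)

lemma bd_dvd_sub: "e \<le> d \<Longrightarrow> bd g e dvd bd g d"
  unfolding bd_def by (rule prod_dvd_prod_subset) auto

lemma sh_bd: "sh (bd g d) s = (\<Prod>i<d. sh g (s - int i))"
  by (simp add: bd_def sh_prod sh_sh)

lemma bd_dvd_sh: "e \<le> d \<Longrightarrow> bd g (d - e) dvd sh (bd g d) (int e)"
proof -
  assume e: "e \<le> d"
  have "bd g (d - e) = (\<Prod>i<d - e. sh g (int e - int (i + e)))"
    by (simp add: bd_def)
  also have "\<dots> = prod (\<lambda>i. sh g (int e - int i)) ((\<lambda>i. i + e) ` {..<d - e})"
    by (subst prod.reindex) (auto simp: inj_on_def)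
  also have "\<dots> dvd (\<Prod>i<d. sh g (int e - int i))"
    by (rule prod_dvd_prod_subset) auto
  finally show ?thesis by (simp add: sh_bd)
qed

lemma g_dvd_sh_bd: "s < d \<Longrightarrow> g dvd sh (bd g d) (int s)"
proof -
  assume s: "s < d"
  have "sh g (int s - int s) dvd (\<Prod>i<d. sh g (int s - int i))"
    by (rule dvd_prodI) (use s in auto)
  then show ?thesis by (simp add: sh_bd)
qed

lemma poly_bd_zero:
  assumes g0: "poly g 0 = 0" and m: "0 \<le> m" "m < int d"
  shows "poly (bd g d) (of_int m) = 0"
proof -
  have "poly (sh g (- int (nat m))) (of_int m) = 0"
    using g0 m by (simp add: sh_def poly_pcompose)
  moreover have "nat m \<in> {..<d}" using m by auto
  ultimately have "\<exists>a\<in>{..<d}. poly (sh g (- int a)) (of_int m) = 0" by blast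
  then show ?thesis
    unfolding bd_def poly_prod by (intro prod_zero) auto
qed

lemma tau_prod: "tau d (prod F A) = (\<Prod>i\<in>A. tau d (F i))"
  by (induction A rule: infinite_finite_induct) (simp_all add: tau_def pcompose_mult)

lemma prod_neg_poly: "(\<Prod>i<d. - F i) = smult ((-1) ^ d) (\<Prod>i<d. F i :: complex poly)"
  by (induction d) (simp_all add: mult_smult_left)

lemma tau_bd:
  assumes go: "pcompose g [:0, -1:] = - g"
  shows "tau d (bd g d) = smult ((-1) ^ d) (bd g d)"
proof -
  have t: "tau d (sh g (- int i)) = - sh g (- int (d - Suc i))" if "i < d" for i
  proof -
    have "tau d (sh g (- int i)) = pcompose (pcompose g [:0, -1:]) [:- (of_int (int d) - 1 - of_int (int i)), 1:]"
      by (simp add: tau_def sh_def pcompose_assoc[symmetric] comp_lin)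
    also have "\<dots> = - sh g (- int (d - Suc i))"
      using that by (simp add: go sh_def pcompose_uminus of_nat_diff algebra_simps)
    finally show ?thesis .
  qed
  have "tau d (bd g d) = (\<Prod>i<d. - sh g (- int (d - Suc i)))"
    unfolding bd_def tau_prod by (intro prod.cong) (simp_all add: t)
  also have "\<dots> = smult ((-1) ^ d) (\<Prod>i<d. sh g (- int (d - Suc i)))"
    by (rule prod_neg_poly)
  also have "(\<Prod>i<d. sh g (- int (d - Suc i))) = bd g d"
    unfolding bd_def by (rule prod.nat_diff_reindex)
  finally show ?thesis .
qed

lemma sh_nz: "g \<noteq> 0 \<Longrightarrow> sh g s \<noteq> 0"
  unfolding sh_def by (subst pcompose_eq_0_iff) auto

lemma bd_nz: "g \<noteq> 0 \<Longrightarrow> bd g d \<noteq> 0"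
  unfolding bd_def by (auto simp: sh_nz)

definition bas :: "nat \<Rightarrow> nat \<Rightarrow> complex poly" where
  "bas d n = smult (1/2) (monom 1 n - tau d (monom 1 n))"

definition Bas :: "complex poly \<Rightarrow> nat \<Rightarrow> complex poly set" where
  "Bas g d = bas d ` {..<degree (bd g d)}"

lemma finite_Bas: "finite (Bas g d)"
  by (simp add: Bas_def)

lemma par_bas: "par (- int d) (bas d n)"
  by (simp add: par_tau bas_def tau_smult tau_diff tau_tau smult_diff_right)

lemma smult_sum_right: "smult c (sum F A) = (\<Sum>i\<in>A. smult c (F i :: complex poly))"
  by (induction A rule: infinite_finite_induct) (simp_all add: smult_add_right)

lemma tau_sum: "tau d (sum F A) = (\<Sum>i\<in>A. tau d (F i))"
  by (induction A rule: infinite_finite_induct) (simp_all add: tau_def pcompose_add)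

lemma decomp_Q:
  assumes go: "pcompose g [:0, -1:] = - g" and g0: "g \<noteq> 0" and f: "par (- int d) f"
  shows "\<exists>p r. p \<in> Qs g d \<and> f = p + (\<Sum>n<degree (bd g d). smult (coeff r n) (bas d n))"
proof -
  define B where "B = bd g d"
  define N where "N = degree B"
  have B0: "B \<noteq> 0" using bd_nz[OF g0] by (simp add: B_def)
  define q where "q = f div B"
  define r where "r = f mod B"
  have fqr: "f = B * q + r" by (simp add: q_def r_def mult_div_mod_eq)
  have cr: "coeff r n = 0" if "N \<le> n" for n
    using degree_mod_less[OF B0, of f] that by (auto simp: r_def N_def coeff_eq_0)
  have rsum: "r = (\<Sum>n<N. smult (coeff r n) (monom 1 n))"
  proof (rule poly_eqI)
    fix k
    have "coeff (\<Sum>n<N. smult (coeff r n) (monom 1 n)) k = (\<Sum>n<N. coeff r n * (if n = k then 1 else 0))"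
      by (simp add: coeff_sum coeff_monom)
    also have "\<dots> = (\<Sum>n<N. if n = k then coeff r n else 0)"
      by (rule sum.cong) auto
    also have "\<dots> = coeff r k" using cr[of k] by (cases "k < N") auto
    finally show "coeff r k = coeff (\<Sum>n<N. smult (coeff r n) (monom 1 n)) k" by simp
  qed
  define c where "c = smult (1/2) (r - tau d r)"
  have csum: "c = (\<Sum>n<N. smult (coeff r n) (bas d n))"
  proof -
    have "c = smult (1/2) ((\<Sum>n<N. smult (coeff r n) (monom 1 n)) - tau d (\<Sum>n<N. smult (coeff r n) (monom 1 n)))"
      by (simp add: c_def rsum[symmetric])
    also have "\<dots> = (\<Sum>n<N. smult (coeff r n) (bas d n))"
      by (simp add: tau_sum tau_smult bas_def sum_subtractf smult_sum_right smult_diff_right)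
    finally show ?thesis .
  qed
  define p where "p = f - c"
  have tf: "tau d f = - f" using f by (simp add: par_tau)
  have "tau d p = - p"
    by (simp add: p_def c_def tau_diff tau_smult tau_tau tf smult_diff_right)
  then have pp: "par (- int d) p" by (simp add: par_tau)
  have fh: "smult (1/2) (f - tau d f) = f"
  proof -
    have "f - tau d f = f + f" by (simp add: tf)
    then have "smult (1/2) (f - tau d f) = smult (1/2) f + smult (1/2) f" by (simp only: smult_add_right)
    also have "\<dots> = smult (1/2 + 1/2) f" by (simp only: smult_add_left)
    also have "\<dots> = f" by simp
    finally show ?thesis .
  qed
  have "p = smult (1/2) (f - tau d f) - smult (1/2) (r - tau d r)"
    by (simp only: fh p_def c_def)
  also have "\<dots> = smult (1/2) ((f - tau d f) - (r - tau d r))"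
    by (rule smult_diff_right[symmetric])
  also have "(f - tau d f) - (r - tau d r) = (f - r) - tau d (f - r)"
    by (simp add: tau_diff algebra_simps)
  also have "f - r = B * q" using fqr by simp
  also have "B * q - tau d (B * q) = B * (q - smult ((-1) ^ d) (tau d q))"
    by (simp add: B_def tau_mult tau_bd[OF go] right_diff_distrib mult.commute)
  finally have "p = smult (1/2) (B * (q - smult ((-1) ^ d) (tau d q)))" .
  then have "p = B * smult (1/2) (q - smult ((-1) ^ d) (tau d q))" by (simp add: mult_smult_right)
  then have "B dvd p" by (rule dvdI)
  then have "p \<in> Qs g d" using pp by (simp add: Qs_def B_def)
  moreover have "f = p + c" by (simp add: p_def)
  ultimately show ?thesis unfolding csum N_def B_def by blast
qed

definition cword :: "complex poly \<Rightarrow> (int \<times> complex poly) list \<Rightarrow> bool" where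
  "cword g cs \<longleftrightarrow> (\<forall>(e, b)\<in>set cs. e < 0 \<and> b \<in> Bas g (nat (- e)))"

lemma cword_Nil[simp]: "cword g []" by (simp add: cword_def)
lemma cword_Cons[simp]: "cword g ((e, b) # cs) \<longleftrightarrow> e < 0 \<and> b \<in> Bas g (nat (- e)) \<and> cword g cs"
  by (simp add: cword_def)

lemma par_Bas: "e < 0 \<Longrightarrow> b \<in> Bas g (nat (- e)) \<Longrightarrow> par e b"
  using par_bas[of "nat (- e)"] by (auto simp: Bas_def)

lemma cword_negw: "cword g cs \<Longrightarrow> negw cs"
  by (induction cs) (auto simp: par_Bas)

lemma cword_deg: "cword g cs \<Longrightarrow> (e, b) \<in> set cs \<Longrightarrow> wdeg cs \<le> e"
proof (induction cs)
  case Nil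
  then show ?case by simp
next
  case (Cons x cs)
  obtain e' b' where x: "x = (e', b')" by (cases x)
  have "wdeg cs \<le> 0" using negw_deg[OF cword_negw] Cons.prems(1) by (simp add: x) (smt (verit) of_nat_0_le_iff)
  then show ?case using Cons by (auto simp: x)
qed

context qfrep
begin

definition CW :: "complex poly \<Rightarrow> nat \<Rightarrow> int \<Rightarrow> 'v set" where
  "CW g n j = {wact cs v | cs. cword g cs \<and> length cs \<le> n \<and> wdeg cs = j}"

lemma CW_mono: "CW g n j \<subseteq> CW g (Suc n) j"
  by (auto simp: CW_def)

lemma span_CW_mono: "u \<in> span (CW g n j) \<Longrightarrow> u \<in> span (CW g (Suc n) j)"
  using span_mono[OF CW_mono] by blast

lemma CW_step:
  assumes e: "e < 0" "b \<in> Bas g (nat (- e))" and u: "u \<in> span (CW g n k)"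
  shows "\<pi> (hom e b) u \<in> span (CW g (Suc n) (e + k))"
proof (rule pi_span[OF hom_in[OF par_Bas[OF e]] _ u])
  fix x assume "x \<in> CW g n k"
  then obtain cs where cs: "x = wact cs v" "cword g cs" "length cs \<le> n" "wdeg cs = k"
    by (auto simp: CW_def)
  have "\<pi> (hom e b) x = wact ((e, b) # cs) v" by (simp add: cs)
  moreover have "wact ((e, b) # cs) v \<in> CW g (Suc n) (e + k)"
    using cs e unfolding CW_def by (intro CollectI exI[of _ "(e, b) # cs"]) simp
  ultimately show "\<pi> (hom e b) x \<in> span (CW g (Suc n) (e + k))" by (simp add: span_base)
qed

lemma qs_zero:
  assumes go: "pcompose g [:0, -1:] = - g" and g0: "g \<noteq> 0"
    and cond: "\<And>q. ell \<Lambda> (g * q - sh (g * q) 1) = 0"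
  shows "1 \<le> d \<Longrightarrow> f \<in> Qs g d \<Longrightarrow> \<pi> (hom (- int d) f) v = 0"
proof (induction d arbitrary: f rule: less_induct)
  case (less d)
  define G where "G = {\<pi> (hom (- int d) f) v | f. f \<in> Qs g d}"
  define T where "T = span G"
  have T: "subspace T" by (simp add: T_def)
  have GE: "G \<subseteq> E (- int d)"
    using eig_hom[OF _ v_E0] by (auto simp: G_def Qs_def)
  have TE: "T \<subseteq> E (- int d)"
    unfolding T_def by (rule span_minimal[OF GE E_subspace])
  have d0: "0 < int d" using less.prems by simp
  have hp: "\<pi> (hom e u) t = 0" if e: "0 < e" "par e u" and t: "t \<in> T" for e u t
  proof -
    have "\<pi> (hom e u) t \<in> span {}"
    proof (rule pi_span[OF hom_in[OF e(2)] _ t[unfolded T_def]])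
      fix x assume "x \<in> G"
      then obtain f where f: "x = \<pi> (hom (- int d) f) v" "f \<in> Qs g d" by (auto simp: G_def)
      have pf: "par (- int d) f" and "bd g d dvd f" using f(2) by (auto simp: Qs_def)
      then obtain q0 where q0: "f = bd g d * q0" by (auto elim!: dvdE)
      have eq: "\<pi> (hom e u) (\<pi> (hom (- int d) f) v) = \<pi> (hom (e + - int d) (brp e u (- int d) f)) v
         + \<pi> (cen (if e + - int d = 0 then psi_mono e u f else 0)) v + \<pi> (hom (- int d) f) (\<pi> (hom e u) v)"
        by (rule pi_comm_hom[OF e(2) pf])
      have z3: "\<pi> (hom (- int d) f) (\<pi> (hom e u) v) = 0"
        using v_pos[OF e] pi_zero[OF hom_in[OF pf]] by simp
      have pP: "par (e + - int d) (brp e u (- int d) f)" by (rule par_brp[OF e(2) pf])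
      have "\<pi> (hom e u) x = 0"
      proof (cases "e < int d")
        case True
        define d' where "d' = d - nat e"
        have d': "1 \<le> d'" "d' < d" "e + - int d = - int d'" "nat e \<le> d"
          using True e(1) by (auto simp: d'_def)
        have "bd g d' dvd f" unfolding q0 using bd_dvd_sub[of d' d g] d' by (simp add: dvd_mult2)
        moreover have "bd g d' dvd sh f e"
        proof -
          have "bd g d' dvd sh (bd g d) (int (nat e))" using bd_dvd_sh[OF d'(4), of g] by (simp add: d'_def)
          then show ?thesis using e(1) by (simp add: q0 sh_mult dvd_mult2)
        qed
        ultimately have "bd g d' dvd brp e u (- int d) f"
          by (simp add: brp_def dvd_diff dvd_mult)
        then have "brp e u (- int d) f \<in> Qs g d'" using pP d'(3) by (simp add: Qs_def)
        then have "\<pi> (hom (- int d') (brp e u (- int d) f)) v = 0" using less.IH d' by blast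
        moreover have "e \<noteq> int d" using True by simp
        ultimately show ?thesis using eq z3 d'(3) by (simp add: f(1) pi_cen0)
      next
        case False
        show ?thesis
        proof (cases "e = int d")
          case True
          have psi0: "psi_mono e u f = 0"
          proof -
            have "poly f (of_int (j + e)) = 0" if "j \<in> {- e..-1}" for j
              using that poly_bd_zero[OF poly_odd_0[OF go], of "j + e" d] True by (simp add: q0)
            then show ?thesis using e(1) by (simp add: psi_mono_def)
          qed
          define \<phi> where "\<phi> = sh u (- int d) * f"
          have P: "brp e u (- int d) f = \<phi> - sh \<phi> (int d)"
            by (simp add: brp_def \<phi>_def True sh_mult sh_sh)
          have "ell \<Lambda> (\<phi> - sh \<phi> (int d)) = 0"
          proof (rule telescope[OF cond])
            fix s assume "s < d"
            then have "g dvd sh f (int s)" by (simp add: q0 sh_mult g_dvd_sh_bd dvd_mult2)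
            then show "g dvd sh \<phi> (int s)" by (simp add: \<phi>_def sh_mult dvd_mult)
          qed
          moreover have p0: "par 0 (brp e u (- int d) f)" using pP True by simp
          ultimately have "\<Lambda> (hom 0 (brp e u (- int d) f)) = 0" using L1 P by simp
          then have "\<pi> (hom 0 (brp e u (- int d) f)) v = 0" using v_zero[OF p0] by simp
          moreover have "psi_mono (int d) u f = 0" using psi0 True by simp
          ultimately show ?thesis using eq z3 True by (simp add: f(1) pi_cen0)
        next
          case False2: False
          then have "0 < e + - int d" using False by simp
          then have "\<pi> (hom (e + - int d) (brp e u (- int d) f)) v = 0" using v_pos pP by blast
          then show ?thesis using eq z3 False2 by (simp add: f(1) pi_cen0)
        qed
      qed
      then show "\<pi> (hom e u) x \<in> span {}" by (simp add: span_zero)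
    qed
    then show ?thesis by simp
  qed
  have h0: "\<pi> (hom 0 h) t \<in> T" if h: "par 0 h" and t: "t \<in> T" for h t
  proof (rule pi_subspace[OF hom_in[OF h] T _ t[unfolded T_def]])
    fix x assume "x \<in> G"
    then obtain f where f: "x = \<pi> (hom (- int d) f) v" "f \<in> Qs g d" by (auto simp: G_def)
    have pf: "par (- int d) f" and "bd g d dvd f" using f(2) by (auto simp: Qs_def)
    have eq: "\<pi> (hom 0 h) (\<pi> (hom (- int d) f) v) = \<pi> (hom (0 + - int d) (brp 0 h (- int d) f)) v
         + \<pi> (cen (if 0 + - int d = 0 then psi_mono 0 h f else 0)) v + \<pi> (hom (- int d) f) (\<pi> (hom 0 h) v)"
      by (rule pi_comm_hom[OF h pf])
    have "brp 0 h (- int d) f = (sh h (- int d) - h) * f" by (simp add: brp_def left_diff_distrib)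
    then have "bd g d dvd brp 0 h (- int d) f" using \<open>bd g d dvd f\<close> by (simp add: dvd_mult)
    then have "brp 0 h (- int d) f \<in> Qs g d" using par_brp[OF h pf] by (simp add: Qs_def)
    then have A: "\<pi> (hom (- int d) (brp 0 h (- int d) f)) v \<in> T"
      unfolding T_def G_def by (intro span_base) blast
    have "\<pi> (hom (- int d) f) (\<pi> (hom 0 h) v) = sc (\<Lambda> (hom 0 h)) x"
      using v_zero[OF h] by (simp add: f(1) pi_sc hom_in[OF pf])
    then have B: "\<pi> (hom (- int d) f) (\<pi> (hom 0 h) v) \<in> T"
      using \<open>x \<in> G\<close> unfolding T_def by (simp add: span_scale span_base)
    have C: "\<pi> (cen (if 0 + - int d = 0 then psi_mono 0 h f else 0)) v = 0"
      using d0 by (simp add: pi_cen0)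
    show "\<pi> (hom 0 h) x \<in> T"
      unfolding f(1) eq C using A B unfolding T_def by (simp add: span_add)
  qed
  have hc: "\<pi> (cen c) t \<in> T" if t: "t \<in> T" for c t
  proof (rule pi_subspace[OF cen_in T _ t[unfolded T_def]])
    fix x assume "x \<in> G"
    then obtain f where f: "x = \<pi> (hom (- int d) f) v" "f \<in> Qs g d" by (auto simp: G_def)
    have pf: "par (- int d) f" using f(2) by (auto simp: Qs_def)
    have "\<pi> (cen c) x = sc (\<Lambda> (cen c)) x"
      by (simp add: f(1) pi_cen_comm[OF hom_in[OF pf]] v_cen pi_sc hom_in[OF pf])
    then show "\<pi> (cen c) x \<in> T" using \<open>x \<in> G\<close> by (simp add: T_def span_scale span_base)
  qed
  have "\<pi> (hom (- int d) f) v \<in> T" using less.prems(2) by (auto simp: T_def G_def intro!: span_base)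
  then show ?case using SVL[OF T TE d0 hp h0 hc] by blast
qed

lemma LB:
  assumes go: "pcompose g [:0, -1:] = - g" and g0: "g \<noteq> 0"
    and cond: "\<And>q. ell \<Lambda> (g * q - sh (g * q) 1) = 0"
  shows "(\<forall>ws. negw ws \<longrightarrow> length ws \<le> n \<longrightarrow> wact ws v \<in> span (CW g n (wdeg ws))) \<and>
         (\<forall>e f cs. e < 0 \<longrightarrow> f \<in> Qs g (nat (- e)) \<longrightarrow> cword g cs \<longrightarrow> length cs \<le> n \<longrightarrow>
             \<pi> (hom e f) (wact cs v) \<in> span (CW g n (e + wdeg cs)))"
proof (induction n)
  case 0
  have v0: "v \<in> CW g 0 0" unfolding CW_def by (intro CollectI exI[of _ "[]"]) simp
  show ?case
  proof (intro conjI allI impI)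
    fix ws :: "(int \<times> complex poly) list" assume "negw ws" "length ws \<le> 0"
    then show "wact ws v \<in> span (CW g 0 (wdeg ws))" using v0 by (simp add: span_base)
  next
    fix e f and cs :: "(int \<times> complex poly) list"
    assume e: "e < 0" "f \<in> Qs g (nat (- e))" "cword g cs" "length cs \<le> 0"
    have "\<pi> (hom (- int (nat (- e))) f) v = 0"
      by (rule qs_zero[OF go g0 cond]) (use e in auto)
    then show "\<pi> (hom e f) (wact cs v) \<in> span (CW g 0 (e + wdeg cs))"
      using e by (simp add: span_zero)
  qed
next
  case (Suc n)
  have IHi: "\<And>ws. negw ws \<Longrightarrow> length ws \<le> n \<Longrightarrow> wact ws v \<in> span (CW g n (wdeg ws))"
    and IHii: "\<And>e f cs. e < 0 \<Longrightarrow> f \<in> Qs g (nat (- e)) \<Longrightarrow> cword g cs \<Longrightarrow> length cs \<le> n \<Longrightarrow>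
             \<pi> (hom e f) (wact cs v) \<in> span (CW g n (e + wdeg cs))"
    using Suc.IH by blast+
  have Pstep: "\<pi> (hom e p) u \<in> span (CW g n (e + k))"
    if e: "e < 0" "p \<in> Qs g (nat (- e))" and u: "u \<in> span (CW g n k)" for e p u k
  proof -
    have pp: "par e p" using e by (simp add: Qs_def)
    show ?thesis
    proof (rule pi_span[OF hom_in[OF pp] _ u])
      fix x assume "x \<in> CW g n k"
      then obtain cs where cs: "x = wact cs v" "cword g cs" "length cs \<le> n" "wdeg cs = k"
        by (auto simp: CW_def)
      show "\<pi> (hom e p) x \<in> span (CW g n (e + k))" using IHii[OF e cs(2,3)] cs by simp
    qed
  qed
  have i': "wact ws v \<in> span (CW g (Suc n) (wdeg ws))" if ws: "negw ws" "length ws \<le> Suc n" for ws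
  proof (cases ws)
    case Nil
    have "v \<in> CW g (Suc n) 0" unfolding CW_def by (intro CollectI exI[of _ "[]"]) simp
    then show ?thesis using Nil by (simp add: span_base)
  next
    case (Cons x ws')
    obtain e f where x: "x = (e, f)" by (cases x)
    have e: "e < 0" "par e f" "negw ws'" "length ws' \<le> n" using ws by (auto simp: Cons x)
    define d where "d = nat (- e)"
    have ed: "e = - int d" using e by (simp add: d_def)
    obtain p r where pr: "p \<in> Qs g d" "f = p + (\<Sum>m<degree (bd g d). smult (coeff r m) (bas d m))"
      using decomp_Q[OF go g0, of d f] e ed by auto
    define w where "w = wact ws' v"
    have w: "w \<in> span (CW g n (wdeg ws'))" using IHi[OF e(3,4)] by (simp add: w_def)
    have pp: "par e p" using pr(1) ed by (simp add: Qs_def)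
    have pbas: "par e (bas d m)" for m using par_bas[of d m] ed by simp
    have pb: "par e (smult (coeff r m) (bas d m))" for m using pbas by (rule par_smult)
    have psum: "par e (\<Sum>m<degree (bd g d). smult (coeff r m) (bas d m))"
      by (rule par_sum) (rule pb)
    have s1: "\<pi> (hom e f) w = \<pi> (hom e p) w + \<pi> (hom e (\<Sum>m<degree (bd g d). smult (coeff r m) (bas d m))) w"
      unfolding pr(2) by (rule pi_hom_add[OF pp psum])
    have s2: "\<pi> (hom e (\<Sum>m<degree (bd g d). smult (coeff r m) (bas d m))) w
       = (\<Sum>m<degree (bd g d). \<pi> (hom e (smult (coeff r m) (bas d m))) w)"
      by (rule pi_hom_sum) (rule pb)
    have s3: "(\<Sum>m<degree (bd g d). \<pi> (hom e (smult (coeff r m) (bas d m))) w)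
       = (\<Sum>m<degree (bd g d). sc (coeff r m) (\<pi> (hom e (bas d m)) w))"
      by (rule sum.cong[OF refl]) (rule pi_hom_smult[OF pbas])
    have "\<pi> (hom e f) w = \<pi> (hom e p) w + (\<Sum>m<degree (bd g d). sc (coeff r m) (\<pi> (hom e (bas d m)) w))"
      using s1 s2 s3 by simp
    also have "\<dots> \<in> span (CW g (Suc n) (e + wdeg ws'))"
    proof (intro span_add span_sum span_scale)
      show "\<pi> (hom e p) w \<in> span (CW g (Suc n) (e + wdeg ws'))"
        using Pstep[OF e(1) _ w] pr(1) by (simp add: d_def span_CW_mono)
    next
      fix m assume "m \<in> {..<degree (bd g d)}"
      then have "bas d m \<in> Bas g (nat (- e))" by (simp add: Bas_def d_def)
      then show "\<pi> (hom e (bas d m)) w \<in> span (CW g (Suc n) (e + wdeg ws'))"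
        by (rule CW_step[OF e(1) _ w])
    qed
    finally show ?thesis by (simp add: Cons x w_def)
  qed
  have ii': "\<pi> (hom e f) (wact cs v) \<in> span (CW g (Suc n) (e + wdeg cs))"
    if h: "e < 0" "f \<in> Qs g (nat (- e))" "cword g cs" "length cs \<le> Suc n" for e f cs
  proof (cases cs)
    case Nil
    have "\<pi> (hom (- int (nat (- e))) f) v = 0"
      by (rule qs_zero[OF go g0 cond]) (use h in auto)
    then show ?thesis using h Nil by (simp add: span_zero)
  next
    case (Cons y cs')
    obtain e' b where y: "y = (e', b)" by (cases y)
    have hb: "e' < 0" "b \<in> Bas g (nat (- e'))" "cword g cs'" "length cs' \<le> n"
      using h by (auto simp: Cons y)
    have pf: "par e f" using h by (simp add: Qs_def)
    have pb: "par e' b" by (rule par_Bas[OF hb(1,2)])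
    define w where "w = wact cs' v"
    have eq: "\<pi> (hom e f) (\<pi> (hom e' b) w) = \<pi> (hom (e + e') (brp e f e' b)) w + \<pi> (hom e' b) (\<pi> (hom e f) w)"
      by (rule pi_comm_hom_ne[OF pf pb]) (use h hb in simp)
    have t1: "\<pi> (hom (e + e') (brp e f e' b)) w \<in> span (CW g (Suc n) (e + wdeg cs))"
    proof -
      have "negw ((e + e', brp e f e' b) # cs')"
        using h(1) hb par_brp[OF pf pb] cword_negw[OF hb(3)] by simp
      from i'[OF this] hb(4) show ?thesis by (simp add: w_def Cons y add.assoc)
    qed
    have t2: "\<pi> (hom e' b) (\<pi> (hom e f) w) \<in> span (CW g (Suc n) (e + wdeg cs))"
    proof -
      have "\<pi> (hom e f) w \<in> span (CW g n (e + wdeg cs'))" using IHii[OF h(1,2) hb(3,4)] by (simp add: w_def)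
      from CW_step[OF hb(1,2) this] show ?thesis by (simp add: Cons y add.commute add.left_commute)
    qed
    show ?thesis using t1 t2 eq by (simp add: Cons y w_def span_add)
  qed
  show ?case using i' ii' by blast
qed

lemma finite_CW: "finite (CW g n j)"
proof -
  define A where "A = Sigma {j..-1} (\<lambda>e. Bas g (nat (- e)))"
  have fA: "finite A" by (simp add: A_def finite_Bas)
  have "CW g n j \<subseteq> (\<lambda>cs. wact cs v) ` {cs. set cs \<subseteq> A \<and> length cs \<le> n}"
  proof
    fix x assume "x \<in> CW g n j"
    then obtain cs where cs: "x = wact cs v" "cword g cs" "length cs \<le> n" "wdeg cs = j"
      by (auto simp: CW_def)
    have "set cs \<subseteq> A"
    proof
      fix y assume y: "y \<in> set cs"
      obtain e b where yeb: "y = (e, b)" by (cases y)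
      have "e < 0" "b \<in> Bas g (nat (- e))" using cs(2) y yeb by (auto simp: cword_def)
      moreover have "j \<le> e" using cword_deg[OF cs(2)] y yeb cs(4) by blast
      ultimately show "y \<in> A" by (simp add: A_def yeb)
    qed
    then show "x \<in> (\<lambda>cs. wact cs v) ` {cs. set cs \<subseteq> A \<and> length cs \<le> n}" using cs by blast
  qed
  moreover have "finite {cs. set cs \<subseteq> A \<and> length cs \<le> n}"
    by (rule finite_lists_length_le[OF fA])
  ultimately show ?thesis using finite_subset by blast
qed

lemma CW_E: "CW g n j \<subseteq> E j"
proof
  fix x assume "x \<in> CW g n j"
  then obtain cs where cs: "x = wact cs v" "cword g cs" "wdeg cs = j" by (auto simp: CW_def)
  show "x \<in> E j" using wact_E[OF negw_parw[OF cword_negw[OF cs(2)]] v_E0] cs by simp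
qed

lemma quasi_reverse:
  assumes go: "pcompose g [:0, -1:] = - g" and g0: "g \<noteq> 0"
    and cond: "\<And>q. ell \<Lambda> (g * q - sh (g * q) 1) = 0"
  shows "quasifinite sc \<pi> \<Lambda>"
  unfolding quasifinite_def
proof
  fix j :: int
  define B where "B = CW g (nat (- j)) j"
  have "NW j \<subseteq> span B"
  proof
    fix x assume "x \<in> NW j"
    then obtain ws where ws: "x = wact ws v" "negw ws" "wdeg ws = j" by (auto simp: NW_def)
    have "length ws \<le> nat (- j)" using negw_deg[OF ws(2)] ws(3) by simp
    moreover have "\<forall>ws. negw ws \<longrightarrow> length ws \<le> nat (- j) \<longrightarrow> wact ws v \<in> span (CW g (nat (- j)) (wdeg ws))"
      using LB[OF go g0 cond, of "nat (- j)"] by blast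
    ultimately have "wact ws v \<in> span (CW g (nat (- j)) (wdeg ws))" using ws(2) by blast
    then show "x \<in> span B" using ws by (simp add: B_def)
  qed
  then have "span (NW j) \<subseteq> span B" by (rule span_minimal) simp
  then have "E j \<subseteq> span B" using E_span_NW by blast
  moreover have "finite B" by (simp add: B_def finite_CW)
  moreover have "B \<subseteq> E j" by (simp add: B_def CW_E)
  ultimately show "\<exists>B. finite B \<and> B \<subseteq> E j \<and> E j \<subseteq> span B" by blast
qed

end




context qfrep
begin

lemma par_monom_odd: "odd n \<Longrightarrow> par (-1) (monom 1 n)"
  by (simp add: par_m1 monom_refl)

lemma exists_kernel:
  assumes q: "quasifinite sc \<pi> \<Lambda>"
  shows "\<exists>g. g \<noteq> 0 \<and> par (-1) g \<and> \<pi> (hom (-1) g) v = 0"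
proof -
  obtain B where B: "finite B" "B \<subseteq> E (-1)" "E (-1) \<subseteq> span B"
    using q unfolding quasifinite_def by blast
  define w where "w m = \<pi> (hom (-1) (monom 1 (2 * m + 1))) v" for m
  have pm: "par (-1) (monom 1 (2 * m + 1))" for m by (rule par_monom_odd) simp
  have wE: "w m \<in> E (-1)" for m
    using eig_hom[OF pm v_E0] by (simp add: w_def)
  define M where "M = {..card B}"
  show ?thesis
  proof (cases "inj_on w M")
    case False
    then obtain m1 m2 where m: "m1 \<noteq> m2" "w m1 = w m2" by (auto simp: inj_on_def)
    define g where "g = monom 1 (2 * m1 + 1) - monom (1::complex) (2 * m2 + 1)"
    have "coeff g (2 * m1 + 1) = 1" using m(1) by (simp add: g_def coeff_monom)
    then have "g \<noteq> 0" by auto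
    moreover have "par (-1) g" unfolding g_def by (rule par_diff[OF pm pm])
    moreover have "\<pi> (hom (-1) g) v = w m1 - w m2"
      unfolding g_def w_def by (rule pi_hom_diff[OF pm pm])
    then have "\<pi> (hom (-1) g) v = 0" using m(2) by simp
    ultimately show ?thesis by blast
  next
    case True
    define W where "W = w ` M"
    have cW: "card W = Suc (card B)" using True by (simp add: W_def M_def card_image)
    have WB: "W \<subseteq> span B" using wE B(3) by (auto simp: W_def)
    have "dependent W"
    proof (rule ccontr)
      assume "\<not> dependent W"
      from independent_span_bound[OF B(1) this WB] cW show False by simp
    qed
    then obtain T U where T: "finite T" "T \<subseteq> W" "(\<Sum>x\<in>T. sc (U x) x) = 0" "\<exists>x\<in>T. U x \<noteq> 0"
      unfolding dependent_explicit by blast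
    define idx where "idx = the_inv_into M w"
    have widx: "w (idx x) = x" if "x \<in> W" for x
      using that True by (simp add: idx_def W_def f_the_inv_into_f)
    have injidx: "inj_on idx W" unfolding idx_def W_def by (rule inj_on_the_inv_into[OF True])
    define g where "g = (\<Sum>x\<in>T. smult (U x) (monom 1 (2 * idx x + 1)))"
    have pg: "par (-1) g" unfolding g_def by (intro par_sum par_smult pm)
    have "\<pi> (hom (-1) g) v = (\<Sum>x\<in>T. \<pi> (hom (-1) (smult (U x) (monom 1 (2 * idx x + 1)))) v)"
      unfolding g_def by (rule pi_hom_sum) (intro par_smult pm)
    also have "\<dots> = (\<Sum>x\<in>T. sc (U x) x)"
    proof (rule sum.cong[OF refl])
      fix x assume "x \<in> T"
      then have "x \<in> W" using T(2) by blast
      then show "\<pi> (hom (-1) (smult (U x) (monom 1 (2 * idx x + 1)))) v = sc (U x) x"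
      proof -
        have "\<pi> (hom (-1) (smult (U x) (monom 1 (2 * idx x + 1)))) v = sc (U x) (w (idx x))"
          unfolding w_def by (rule pi_hom_smult[OF pm])
        then show ?thesis using widx[OF \<open>x \<in> W\<close>] by simp
      qed
    qed
    also have "\<dots> = 0" by (rule T(3))
    finally have gv: "\<pi> (hom (-1) g) v = 0" .
    obtain x0 where x0: "x0 \<in> T" "U x0 \<noteq> 0" using T(4) by blast
    have "coeff g (2 * idx x0 + 1) = (\<Sum>x\<in>T. if x = x0 then U x else 0)"
      unfolding g_def coeff_sum
    proof (rule sum.cong[OF refl])
      fix x assume x: "x \<in> T"
      have "idx x = idx x0 \<longleftrightarrow> x = x0"
        using injidx x x0(1) T(2) by (auto simp: inj_on_def)
      then show "coeff (smult (U x) (monom 1 (2 * idx x + 1))) (2 * idx x0 + 1) = (if x = x0 then U x else 0)"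
        by (auto simp: coeff_monom)
    qed
    also have "\<dots> = U x0" using T(1) x0(1) by simp
    finally have "g \<noteq> 0" using x0(2) by auto
    then show ?thesis using pg gv by blast
  qed
qed

lemma ell_pdiff_Delta:
  "ell \<Lambda> (g * monom 1 n) = - (fact n * pdiff g (fps_exp (-1/2) * DeltaFps \<Lambda>) $ n)"
  by (simp add: ell_gX DeltaFps_Dl pdiff_uminus mult.commute)

lemma forward:
  assumes q: "quasifinite sc \<pi> \<Lambda>"
  shows "\<exists>F. is_quasipoly F \<and> (\<forall>x. F (- x) = F x) \<and> F 0 = 0 \<and>
           taylor_fps F = (fps_exp (1/2) - fps_exp (-1/2)) * DeltaFps \<Lambda>"
proof -
  obtain g where g: "g \<noteq> 0" "par (-1) g" "\<pi> (hom (-1) g) v = 0"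
    using exists_kernel[OF q] by blast
  have og: "oddp g" using g(2) by (simp add: oddp_iff par_m1)
  have "\<forall>n. odd n \<longrightarrow> pdiff g (fps_exp (-1/2) * DeltaFps \<Lambda>) $ n = 0"
  proof (intro allI impI)
    fix n :: nat assume n: "odd n"
    have "ell \<Lambda> (g * monom 1 n) = 0" by (rule cond_forward[OF g(2,3) n])
    then show "pdiff g (fps_exp (-1/2) * DeltaFps \<Lambda>) $ n = 0"
      by (simp add: ell_pdiff_Delta)
  qed
  then show ?thesis by (rule final_forward_fps[OF DeltaFps_odd g(1) og])
qed

lemma reverse:
  assumes F: "is_quasipoly F" and T: "taylor_fps F = (fps_exp (1/2) - fps_exp (-1/2)) * DeltaFps \<Lambda>"
  shows "quasifinite sc \<pi> \<Lambda>"
proof -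
  obtain g where g: "g \<noteq> 0" "oddp g" "\<forall>n. odd n \<longrightarrow> pdiff g (fps_exp (-1/2) * DeltaFps \<Lambda>) $ n = 0"
    using final_reverse_fps[OF DeltaFps_odd F T] by blast
  have go: "pcompose g [:0, -1:] = - g" using g(2) by (simp add: oddp_iff)
  have c: "ell \<Lambda> (g * monom 1 n) = 0" if "odd n" for n
    using g(3) that by (simp add: ell_pdiff_Delta)
  show ?thesis by (rule quasi_reverse[OF go g(1) cond_reverse[OF go c]])
qed

end

theorem mainTheorem4:
  fixes sc :: "complex \<Rightarrow> 'v::ab_group_add \<Rightarrow> 'v"
    and \<pi> :: "dhat \<Rightarrow> 'v \<Rightarrow> 'v"
    and \<Lambda> :: "dhat \<Rightarrow> complex"
    and v :: 'v
  assumes "linear_on_zero \<Lambda>"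
    and "is_rep sc \<pi>"
    and "hw_vector sc \<pi> \<Lambda> v"
    and "irreducible_rep sc \<pi>"
  shows "quasifinite sc \<pi> \<Lambda> \<longleftrightarrow>
    (\<exists>F. is_quasipoly F \<and> (\<forall>x. F (- x) = F x) \<and> F 0 = 0 \<and>
         taylor_fps F = (fps_exp (1/2) - fps_exp (-1/2)) * DeltaFps \<Lambda>)"
proof -
  interpret qfrep sc \<pi> \<Lambda> v
    by unfold_locales (use assms in auto)
  show ?thesis using forward reverse by blast
qed


end
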